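(* Let $2\le n\le\infty$, $r\ge 0$, $p,q\in\mathbb Z$ and let $A$ be an $n$-multicomplex. Then the map $\pi_r\colon ZW_r^{p,q}(A)\to E_r^{p,q}(A)$, defined as the composite of $z_r\colon ZW_r^{p,q}(A)\to Z_r^{p,q}(A)$ (where $z_0=\mathrm{id}$ and $z_r(a_0,\dots,a_{r-1})=a_0$ for $r\ge1$) with the quotient map $Z_r^{p,q}(A)\to E_r^{p,q}(A)$, is surjective and satisfies $\ker\pi_r=\operatorname{im} w_r$, where $w_r\colon BW_r^{p,q-1}(A)\to ZW_r^{p,q}(A)$. Moreover $z_r\circ w_r=\beta_r$ lands in $B^{p,q}_r(A)$, where $\beta_0=0$, $\beta_1=d_0$ and for $r\ge2$, $\beta_r(b_0,\dots,b_{r-2};a;c_0,\dots,c_{r-2})=d_0a+\sum_{i=1}^{r-1}(-1)^id_ib_{r-1-i}$. Hence $E_r^{p,q}(A)\cong ZW_r^{p,q}(A)/w_r(BW_r^{p,q-1}(A))$, naturally in $A$, and under this isomorphism the differential $\Delta_r$ of $E_r$ corresponds to the well-defined map \[ [(a_0,\dots,a_{r-1})]\longmapsto \Big[\Big(\sum_{i=1}^r(-1)^id_{i+k}a_{r-i}\Big)_{k=0,\dots,r-1}\Big] \] from $ZW_r^{p,q}(A)/w_r(BW_r^{p,q-1}(A))$ to $ZW_r^{p-r,q+1-r}(A)/w_r(BW_r^{p-r,q-r}(A))$.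
   Context: Throughout, $R$ is a commutative unital ring. For $1\le n\le\infty$, an $n$-multicomplex is a $\mathbb Z\times\mathbb Z$-bigraded $R$-module $A=\{A^{p,q}\}$ with $R$-linear maps $d_i\colon A\to A$ ($i\ge0$) of bidegree $(-i,1-i)$ such that $\sum_{i+j=l}(-1)^id_id_j=0$ for all $l\ge0$, and $d_i=0$ for all $i\ge n$ (no vanishing condition when $n=\infty$). Morphisms are bidegree $(0,0)$ $R$-linear maps commuting with all $d_i$; the category is denoted $\mathrm{Ch}_n$. Spectral sequence: $Z_0^{p,q}(A)=A^{p,q}$; for $r\ge1$, $Z_r^{p,q}(A)$ is the set of $a_0\in A^{p,q}$ for which there exist $a_j\in A^{p-j,q-j}$ ($1\le j\le r-1$) with $\sum_{i+j=l}(-1)^id_ia_j=0$ for $0\le l\le r-1$. $B_0^{p,q}(A)=0$, $B_1^{p,q}(A)=A^{p,q}\cap\operatorname{im}d_0$, and for $r\ge2$, $B_r^{p,q}(A)$ is the set of $x\in A^{p,q}$ for which there exist $b_i\in A^{p+r-1-i,q+r-2-i}$ ($0\le i\le r-1$) with $x=\sum_{i=0}^{r-1}(-1)^id_ib_{r-1-i}$ and $\sum_{i=0}^l(-1)^id_ib_{l-i}=0$ for $0\le l\le r-2$. Then $E_r^{p,q}(A)=Z_r^{p,q}(A)/B_r^{p,q}(A)$ with differential $\Delta_r[a_0]=[\sum_{i=1}^r(-1)^id_ia_{r-i}]$ (with $a_j$ as in the definition of $Z_r$). Witness cycles: $ZW_0^{p,q}(A)=A^{p,q}$; for $r\ge1$,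 $ZW_r^{p,q}(A)$ is the $R$-module of tuples $(a_0,\dots,a_{r-1})$ with $a_i\in A^{p-i,q-i}$ and $\sum_{i+j=l}(-1)^id_ia_j=0$ for $0\le l\le r-1$. Witness boundaries: $BW_0^{p,q-1}(A)=0$, $BW_1^{p,q-1}(A)=A^{p,q-1}$, and for $r\ge2$, $BW_r^{p,q-1}(A)=ZW_{r-1}^{p+r-1,q+r-2}(A)\oplus A^{p,q-1}\oplus ZW_{r-1}^{p-1,q-1}(A)$, with elements written $(b_0,\dots,b_{r-2};a;c_0,\dots,c_{r-2})$. The map $w_r\colon BW_r^{p,q-1}(A)\to ZW_r^{p,q}(A)$ is $w_0=0$, $w_1=d_0$, and for $r\ge2$ its $j$-th component ($0\le j\le r-1$) is \[ w_r(\underline b;a;\underline c)_j=d_ja+(-1)^j\sum_{i=j+1}^{r+j-1}(-1)^id_ib_{r+j-1-i}+c_{j-1},\qquad c_{-1}:=0. \] *)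

theory Defs
  imports Complex_Main "HOL-Library.Extended_Nat"
begin

(* A bigraded R-module A = {A^{p,q}} is given by an ambient R-module (type 'a,
   scalar multiplication scale) together with a family of submodules
   A p q :: 'a set.  A map d_i of bidegree (-i,1-i) is given degreewise:
   d i p q : A^{p,q} -> A^{p-i,q+1-i}.  Tuples (a_0,...,a_{r-1}) are encoded as
   functions nat => 'a that vanish from index max r 1 on; ZW_0 = A^{p,q} is
   encoded as the tuples (a_0) with a_0 in A^{p,q}. *)

definition sg :: "nat \<Rightarrow> 'a::ab_group_add \<Rightarrow> 'a" where
  "sg i x = (if even i then x else - x)"

definition multicomplex ::
  "('r::comm_ring_1 \<Rightarrow> 'a::ab_group_add \<Rightarrow> 'a) \<Rightarrow> enat \<Rightarrow> (int \<Rightarrow> int \<Rightarrow> 'a set)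
   \<Rightarrow> (nat \<Rightarrow> int \<Rightarrow> int \<Rightarrow> 'a \<Rightarrow> 'a) \<Rightarrow> bool" where
  "multicomplex scale n A d \<longleftrightarrow>
     module scale \<and>
     (\<forall>p q. module.subspace scale (A p q)) \<and>
     (\<forall>i p q x. x \<in> A p q \<longrightarrow> d i p q x \<in> A (p - int i) (q + 1 - int i)) \<and>
     (\<forall>i p q x y. x \<in> A p q \<longrightarrow> y \<in> A p q \<longrightarrow> d i p q (x + y) = d i p q x + d i p q y) \<and>
     (\<forall>i p q c x. x \<in> A p q \<longrightarrow> d i p q (scale c x) = scale c (d i p q x)) \<and>
     (\<forall>l p q x. x \<in> A p q \<longrightarrow>
        (\<Sum>i\<le>l. sg i (d i (p - int (l - i)) (q + 1 - int (l - i)) (d (l - i) p q x))) = 0) \<and>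
     (\<forall>i p q x. enat i \<ge> n \<longrightarrow> x \<in> A p q \<longrightarrow> d i p q x = 0)"

definition mc_morphism ::
  "('r::comm_ring_1 \<Rightarrow> 'a::ab_group_add \<Rightarrow> 'a) \<Rightarrow> (int \<Rightarrow> int \<Rightarrow> 'a set) \<Rightarrow> (nat \<Rightarrow> int \<Rightarrow> int \<Rightarrow> 'a \<Rightarrow> 'a)
   \<Rightarrow> ('r \<Rightarrow> 'b::ab_group_add \<Rightarrow> 'b) \<Rightarrow> (int \<Rightarrow> int \<Rightarrow> 'b set) \<Rightarrow> (nat \<Rightarrow> int \<Rightarrow> int \<Rightarrow> 'b \<Rightarrow> 'b)
   \<Rightarrow> (int \<Rightarrow> int \<Rightarrow> 'a \<Rightarrow> 'b) \<Rightarrow> bool" where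
  "mc_morphism scale A d scale' A' d' f \<longleftrightarrow>
     (\<forall>p q x. x \<in> A p q \<longrightarrow> f p q x \<in> A' p q) \<and>
     (\<forall>p q x y. x \<in> A p q \<longrightarrow> y \<in> A p q \<longrightarrow> f p q (x + y) = f p q x + f p q y) \<and>
     (\<forall>p q c x. x \<in> A p q \<longrightarrow> f p q (scale c x) = scale' c (f p q x)) \<and>
     (\<forall>i p q x. x \<in> A p q \<longrightarrow> f (p - int i) (q + 1 - int i) (d i p q x) = d' i p q (f p q x))"

definition Zr :: "(int \<Rightarrow> int \<Rightarrow> 'a::ab_group_add set) \<Rightarrow> (nat \<Rightarrow> int \<Rightarrow> int \<Rightarrow> 'a \<Rightarrow> 'a)
                   \<Rightarrow> nat \<Rightarrow> int \<Rightarrow> int \<Rightarrow> 'a set" where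
  "Zr A d r p q = (if r = 0 then A p q else
     {a0 \<in> A p q. \<exists>a. a 0 = a0 \<and> (\<forall>j\<in>{1..r-1}. a j \<in> A (p - int j) (q - int j)) \<and>
        (\<forall>l<r. (\<Sum>i\<le>l. sg i (d i (p - int (l - i)) (q - int (l - i)) (a (l - i)))) = 0)})"

definition Br :: "(int \<Rightarrow> int \<Rightarrow> 'a::ab_group_add set) \<Rightarrow> (nat \<Rightarrow> int \<Rightarrow> int \<Rightarrow> 'a \<Rightarrow> 'a)
                   \<Rightarrow> nat \<Rightarrow> int \<Rightarrow> int \<Rightarrow> 'a set" where
  "Br A d r p q = (if r = 0 then {0} else
     {x \<in> A p q. \<exists>b. (\<forall>i<r. b i \<in> A (p + int r - 1 - int i) (q + int r - 2 - int i)) \<and>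
        x = (\<Sum>i<r. sg i (d i (p + int i) (q + int i - 1) (b (r - 1 - i)))) \<and>
        (\<forall>l. l + 2 \<le> r \<longrightarrow>
           (\<Sum>i\<le>l. sg i (d i (p + int r - 1 - int l + int i) (q + int r - 2 - int l + int i) (b (l - i)))) = 0)})"

definition ecl :: "(int \<Rightarrow> int \<Rightarrow> 'a::ab_group_add set) \<Rightarrow> (nat \<Rightarrow> int \<Rightarrow> int \<Rightarrow> 'a \<Rightarrow> 'a)
                   \<Rightarrow> nat \<Rightarrow> int \<Rightarrow> int \<Rightarrow> 'a \<Rightarrow> 'a set" where
  "ecl A d r p q z = (\<lambda>b. z + b) ` Br A d r p q"

definition Er :: "(int \<Rightarrow> int \<Rightarrow> 'a::ab_group_add set) \<Rightarrow> (nat \<Rightarrow> int \<Rightarrow> int \<Rightarrow> 'a \<Rightarrow> 'a)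
                   \<Rightarrow> nat \<Rightarrow> int \<Rightarrow> int \<Rightarrow> 'a set set" where
  "Er A d r p q = ecl A d r p q ` Zr A d r p q"

definition ZW :: "(int \<Rightarrow> int \<Rightarrow> 'a::ab_group_add set) \<Rightarrow> (nat \<Rightarrow> int \<Rightarrow> int \<Rightarrow> 'a \<Rightarrow> 'a)
                   \<Rightarrow> nat \<Rightarrow> int \<Rightarrow> int \<Rightarrow> (nat \<Rightarrow> 'a) set" where
  "ZW A d r p q = {a. (\<forall>i < max r 1. a i \<in> A (p - int i) (q - int i)) \<and>
                      (\<forall>i. max r 1 \<le> i \<longrightarrow> a i = 0) \<and>
                      (\<forall>l<r. (\<Sum>i\<le>l. sg i (d i (p - int (l - i)) (q - int (l - i)) (a (l - i)))) = 0)}"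

definition Delta :: "(int \<Rightarrow> int \<Rightarrow> 'a::ab_group_add set) \<Rightarrow> (nat \<Rightarrow> int \<Rightarrow> int \<Rightarrow> 'a \<Rightarrow> 'a)
                   \<Rightarrow> nat \<Rightarrow> int \<Rightarrow> int \<Rightarrow> 'a set \<Rightarrow> 'a set" where
  "Delta A d r p q X = (let a = (SOME a. a \<in> ZW A d r p q \<and> a 0 \<in> X) in
     ecl A d r (p - int r) (q + 1 - int r)
       (\<Sum>i\<in>{1..r}. sg i (d i (p - int (r - i)) (q - int (r - i)) (a (r - i)))))"

text \<open>BW_r^{p,q}(A) (witness boundaries), elements (b, a, c); for r \<le> 1 the unused
  components are 0.  Note: the paper's BW_r^{p,q-1} is BW A d r p (q - 1).\<close>
definition BW :: "(int \<Rightarrow> int \<Rightarrow> 'a::ab_group_add set) \<Rightarrow> (nat \<Rightarrow> int \<Rightarrow> int \<Rightarrow> 'a \<Rightarrow> 'a)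
                   \<Rightarrow> nat \<Rightarrow> int \<Rightarrow> int \<Rightarrow> ((nat \<Rightarrow> 'a) \<times> 'a \<times> (nat \<Rightarrow> 'a)) set" where
  "BW A d r p q = {(b, a, c).
     (if r = 0 then b = (\<lambda>_. 0) \<and> a = 0 \<and> c = (\<lambda>_. 0)
      else if r = 1 then b = (\<lambda>_. 0) \<and> a \<in> A p q \<and> c = (\<lambda>_. 0)
      else b \<in> ZW A d (r - 1) (p + int r - 1) (q + int r - 1) \<and> a \<in> A p q \<and>
           c \<in> ZW A d (r - 1) (p - 1) q)}"

definition w :: "(int \<Rightarrow> int \<Rightarrow> 'a::ab_group_add set) \<Rightarrow> (nat \<Rightarrow> int \<Rightarrow> int \<Rightarrow> 'a \<Rightarrow> 'a)
                   \<Rightarrow> nat \<Rightarrow> int \<Rightarrow> int \<Rightarrow> (nat \<Rightarrow> 'a) \<times> 'a \<times> (nat \<Rightarrow> 'a) \<Rightarrow> nat \<Rightarrow> 'a" where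
  "w A d r p q x j = (case x of (b, a, c) \<Rightarrow>
     (if r = 0 then 0
      else if r = 1 then (if j = 0 then d 0 p (q - 1) a else 0)
      else if j < r then
        d j p (q - 1) a
        + sg j (\<Sum>i\<in>{j+1..r+j-1}. sg i (d i (p - int j + int i) (q - 1 - int j + int i) (b (r + j - 1 - i))))
        + (if j = 0 then 0 else c (j - 1))
      else 0))"

definition zr :: "(nat \<Rightarrow> 'a) \<Rightarrow> 'a" where
  "zr a = a 0"

definition pi_r :: "(int \<Rightarrow> int \<Rightarrow> 'a::ab_group_add set) \<Rightarrow> (nat \<Rightarrow> int \<Rightarrow> int \<Rightarrow> 'a \<Rightarrow> 'a)
                   \<Rightarrow> nat \<Rightarrow> int \<Rightarrow> int \<Rightarrow> (nat \<Rightarrow> 'a) \<Rightarrow> 'a set" where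
  "pi_r A d r p q a = ecl A d r p q (zr a)"

definition beta :: "(nat \<Rightarrow> int \<Rightarrow> int \<Rightarrow> 'a::ab_group_add \<Rightarrow> 'a)
                   \<Rightarrow> nat \<Rightarrow> int \<Rightarrow> int \<Rightarrow> (nat \<Rightarrow> 'a) \<times> 'a \<times> (nat \<Rightarrow> 'a) \<Rightarrow> 'a" where
  "beta d r p q x = (case x of (b, a, c) \<Rightarrow>
     (if r = 0 then 0
      else if r = 1 then d 0 p (q - 1) a
      else d 0 p (q - 1) a + (\<Sum>i\<in>{1..r-1}. sg i (d i (p + int i) (q - 1 + int i) (b (r - 1 - i))))))"

definition delta :: "(nat \<Rightarrow> int \<Rightarrow> int \<Rightarrow> 'a::ab_group_add \<Rightarrow> 'a)
                   \<Rightarrow> nat \<Rightarrow> int \<Rightarrow> int \<Rightarrow> (nat \<Rightarrow> 'a) \<Rightarrow> nat \<Rightarrow> 'a" where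
  "delta d r p q a k = (if k < r then
     (\<Sum>i\<in>{1..r}. sg i (d (i + k) (p - int r + int i) (q - int r + int i) (a (r - i))))
     else 0)"

definition ZWmap :: "(int \<Rightarrow> int \<Rightarrow> 'a \<Rightarrow> 'b::zero) \<Rightarrow> nat \<Rightarrow> int \<Rightarrow> int \<Rightarrow> (nat \<Rightarrow> 'a) \<Rightarrow> nat \<Rightarrow> 'b" where
  "ZWmap f r p q a k = (if k < max r 1 then f (p - int k) (q - int k) (a k) else 0)"

definition Emap :: "(int \<Rightarrow> int \<Rightarrow> 'b::ab_group_add set) \<Rightarrow> (nat \<Rightarrow> int \<Rightarrow> int \<Rightarrow> 'b \<Rightarrow> 'b)
                   \<Rightarrow> (int \<Rightarrow> int \<Rightarrow> 'a \<Rightarrow> 'b) \<Rightarrow> nat \<Rightarrow> int \<Rightarrow> int \<Rightarrow> 'a set \<Rightarrow> 'b set" where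
  "Emap A' d' f r p q X = ecl A' d' r p q (f p q (SOME z. z \<in> X))"

end

theory Submission
  imports Defs
begin


lemma sg_0[simp]: "sg 0 x = x" by (simp add: sg_def)
lemma sg_Suc: "sg (Suc i) x = - sg i x" by (simp add: sg_def)
lemma sg_zero[simp]: "sg i 0 = 0" by (simp add: sg_def)
lemma sg_add: "sg i (x + y) = sg i x + sg i y" by (simp add: sg_def)
lemma sg_neg: "sg i (- x) = - sg i x" by (simp add: sg_def)
lemma sg_diff: "sg i (x - y) = sg i x - sg i y" by (simp add: sg_def)
lemma sg_sg: "sg i (sg j x) = sg (i + j) x" by (simp add: sg_def)
lemma sg_sum: "sg i (sum f S) = sum (\<lambda>x. sg i (f x)) S"
  by (simp add: sg_def sum_negf)
lemma sg_par: "even i = even j \<Longrightarrow> sg i x = sg j x" by (simp add: sg_def)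
lemma sg_1[simp]: "sg 1 x = - x" by (simp add: sg_def)

locale MC =
  fixes scale :: "'r::comm_ring_1 \<Rightarrow> 'a::ab_group_add \<Rightarrow> 'a"
    and n :: enat and A :: "int \<Rightarrow> int \<Rightarrow> 'a set" and d :: "nat \<Rightarrow> int \<Rightarrow> int \<Rightarrow> 'a \<Rightarrow> 'a"
  assumes mc: "multicomplex scale n A d"
begin

lemma modl: "module scale" using mc by (simp add: multicomplex_def)
lemma subs: "module.subspace scale (A p q)" using mc by (simp add: multicomplex_def)

lemma A0[simp,intro]: "0 \<in> A p q"
  using module.subspace_0[OF modl subs] .
lemma Aadd[intro]: "x \<in> A p q \<Longrightarrow> y \<in> A p q \<Longrightarrow> x + y \<in> A p q"
  using module.subspace_add[OF modl subs] .
lemma Aneg[intro]: "x \<in> A p q \<Longrightarrow> - x \<in> A p q"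
  using module.subspace_neg[OF modl subs] .
lemma Adiff[intro]: "x \<in> A p q \<Longrightarrow> y \<in> A p q \<Longrightarrow> x - y \<in> A p q"
  using module.subspace_diff[OF modl subs] .
lemma Asum[intro]: "(\<And>x. x \<in> S \<Longrightarrow> f x \<in> A p q) \<Longrightarrow> sum f S \<in> A p q"
  using module.subspace_sum[OF modl subs] by blast
lemma Asg[intro]: "x \<in> A p q \<Longrightarrow> sg i x \<in> A p q"
  by (simp add: sg_def Aneg)

lemma dA: "x \<in> A p q \<Longrightarrow> d i p q x \<in> A (p - int i) (q + 1 - int i)"
  using mc by (simp add: multicomplex_def)
lemma dA': "x \<in> A p q \<Longrightarrow> p' = p - int i \<Longrightarrow> q' = q + 1 - int i \<Longrightarrow> d i p q x \<in> A p' q'"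
  using dA by simp
lemma dadd: "x \<in> A p q \<Longrightarrow> y \<in> A p q \<Longrightarrow> d i p q (x + y) = d i p q x + d i p q y"
  using mc by (simp add: multicomplex_def)
lemma dscale: "x \<in> A p q \<Longrightarrow> d i p q (scale c x) = scale c (d i p q x)"
  using mc by (simp add: multicomplex_def)
lemma d0[simp]: "d i p q 0 = 0"
  using dadd[of 0 p q 0 i] by simp
lemma dneg: "x \<in> A p q \<Longrightarrow> d i p q (- x) = - d i p q x"
proof -
  assume x: "x \<in> A p q"
  have "d i p q x + d i p q (- x) = 0" using dadd[of x p q "-x" i] x by (simp add: Aneg)
  then show ?thesis by (metis minus_unique)
qed
lemma ddiff: "x \<in> A p q \<Longrightarrow> y \<in> A p q \<Longrightarrow> d i p q (x - y) = d i p q x - d i p q y"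
  using dadd[of x p q "-y" i] dneg[of y p q i] by (simp add: Aneg)
lemma dsg: "x \<in> A p q \<Longrightarrow> d i p q (sg j x) = sg j (d i p q x)"
  by (simp add: sg_def dneg)
lemma dsum: "finite S \<Longrightarrow> (\<And>x. x \<in> S \<Longrightarrow> f x \<in> A p q) \<Longrightarrow> d i p q (sum f S) = (\<Sum>x\<in>S. d i p q (f x))"
proof (induction S rule: finite_induct)
  case empty then show ?case by simp
next
  case (insert x F)
  then show ?case by (simp add: dadd Asum)
qed
lemma ident: "x \<in> A p q \<Longrightarrow>
   (\<Sum>i\<le>l. sg i (d i (p - int (l - i)) (q + 1 - int (l - i)) (d (l - i) p q x))) = 0"
  using mc by (simp add: multicomplex_def)

end



lemma sum_split_top:
  fixes f :: "nat \<Rightarrow> 'a::ab_group_add"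
  shows "(\<Sum>i\<le>l + s. f i) = (\<Sum>i\<le>l. f i) + (\<Sum>k<s. f (l + s - k))"
proof -
  have "{..l + s} = {..l} \<union> {l<..l+s}" by auto
  then have "(\<Sum>i\<le>l + s. f i) = sum f ({..l} \<union> {l<..l+s})" by simp
  also have "\<dots> = (\<Sum>i\<le>l. f i) + (\<Sum>i\<in>{l<..l+s}. f i)"
    by (rule sum.union_disjoint) auto
  also have "(\<Sum>i\<in>{l<..l+s}. f i) = (\<Sum>k<s. f (l + s - k))"
    by (rule sum.reindex_bij_witness[where i="\<lambda>k. l + s - k" and j="\<lambda>i. l + s - i"]) auto
  finally show ?thesis .
qed

lemma sum_tri_swap:
  fixes T :: "nat \<Rightarrow> nat \<Rightarrow> 'a::ab_group_add"
  shows "(\<Sum>m<R. \<Sum>k<R - m. T m k) = (\<Sum>t<R. \<Sum>k\<le>t. T (t - k) k)"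
proof -
  have "(\<Sum>m<R. \<Sum>k<R - m. T m k) = (\<Sum>(m,k)\<in>Sigma {..<R} (\<lambda>m. {..<R-m}). T m k)"
    by (simp add: sum.Sigma)
  also have "\<dots> = (\<Sum>(k,m)\<in>{(i,j). i + j < R}. T m k)"
    by (rule sum.reindex_bij_witness[where i="\<lambda>(k,m). (m,k)" and j="\<lambda>(m,k). (k,m)"]) auto
  also have "\<dots> = (\<Sum>t<R. \<Sum>k\<le>t. T (t - k) k)"
    by (rule sum.triangle_reindex)
  finally show ?thesis .
qed

context MC begin

definition Ds :: "int \<Rightarrow> int \<Rightarrow> (nat \<Rightarrow> 'a) \<Rightarrow> nat \<Rightarrow> 'a" where
  "Ds P Q s l = (\<Sum>i\<le>l. sg i (d i (P - int (l - i)) (Q - int (l - i)) (s (l - i))))"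

lemma G:
  assumes bA: "\<And>m. m < R \<Longrightarrow> b m \<in> A (P - int m) (Q - int m)"
    and bc: "\<And>t. t < R \<Longrightarrow> Ds P Q b t = 0"
    and P': "P' = P - int R" and Q': "Q' = Q + 1 - int R"
    and V: "\<And>j. j \<le> l \<Longrightarrow> V j = (\<Sum>m<R. sg (R - m) (d (R - m + j) (P - int m) (Q - int m) (b m)))"
  shows "Ds P' Q' V l = 0"
proof -
  define Y where "Y m i = d i (P - int m - int (l + (R - m) - i)) (Q - int m + 1 - int (l + (R - m) - i))
      (d (l + (R - m) - i) (P - int m) (Q - int m) (b m))" for m i
  define T where "T m k = sg (l + k) (d (l + R - (m + k)) (P - int m - int k) (Q - int m + 1 - int k)
      (d k (P - int m) (Q - int m) (b m)))" for m k
  have s1: "Ds P' Q' V l = (\<Sum>i\<le>l. \<Sum>m<R. sg (R - m) (sg i (Y m i)))"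
    unfolding Ds_def
  proof (rule sum.cong[OF refl])
    fix i assume i: "i \<in> {..l}"
    have "V (l - i) = (\<Sum>m<R. sg (R - m) (d (R - m + (l - i)) (P - int m) (Q - int m) (b m)))"
      by (rule V) (use i in simp)
    moreover have mem: "sg (R - m) (d (R - m + (l - i)) (P - int m) (Q - int m) (b m)) \<in> A (P' - int (l - i)) (Q' - int (l - i))"
      if "m \<in> {..<R}" for m
      using that i by (intro Asg dA'[OF bA]) (auto simp: P' Q' of_nat_diff)
    ultimately have "sg i (d i (P' - int (l - i)) (Q' - int (l - i)) (V (l - i)))
       = (\<Sum>m<R. sg i (d i (P' - int (l - i)) (Q' - int (l - i)) (sg (R - m) (d (R - m + (l - i)) (P - int m) (Q - int m) (b m)))))"
      by (simp only: dsum[OF finite_lessThan mem] sg_sum)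
    also have "\<dots> = (\<Sum>m<R. sg (R - m) (sg i (Y m i)))"
    proof (rule sum.cong[OF refl])
      fix m assume m: "m \<in> {..<R}"
      have e1: "R - m + (l - i) = l + (R - m) - i" using i m by auto
      have e2: "P' - int (l - i) = P - int m - int (l + (R - m) - i)"
           "Q' - int (l - i) = Q - int m + 1 - int (l + (R - m) - i)"
        using i m by (auto simp: P' Q' of_nat_diff)
      show "sg i (d i (P' - int (l - i)) (Q' - int (l - i)) (sg (R - m) (d (R - m + (l - i)) (P - int m) (Q - int m) (b m))))
          = sg (R - m) (sg i (Y m i))"
        unfolding Y_def e1 e2
        using m i by (subst dsg) (auto intro!: dA'[OF bA] simp: sg_sg add.commute of_nat_diff)
    qed
    finally show "sg i (d i (P' - int (l - i)) (Q' - int (l - i)) (V (l - i))) = (\<Sum>m<R. sg (R - m) (sg i (Y m i)))" .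
  qed
  also have "\<dots> = (\<Sum>m<R. \<Sum>i\<le>l. sg (R - m) (sg i (Y m i)))"
    by (rule sum.swap)
  also have "\<dots> = (\<Sum>m<R. - (\<Sum>k<R - m. T m k))"
  proof (rule sum.cong[OF refl])
    fix m assume m: "m \<in> {..<R}"
    have id: "(\<Sum>i\<le>l + (R - m). sg i (Y m i)) = 0"
      unfolding Y_def using ident[OF bA[of m], of "l + (R - m)"] m by simp
    have "(\<Sum>i\<le>l. sg i (Y m i)) = - (\<Sum>k<R - m. sg (l + (R - m) - k) (Y m (l + (R - m) - k)))"
      using id sum_split_top[of "\<lambda>i. sg i (Y m i)" l "R - m"] by (simp add: eq_neg_iff_add_eq_0)
    then have "(\<Sum>i\<le>l. sg (R - m) (sg i (Y m i))) = - (\<Sum>k<R - m. sg (R - m) (sg (l + (R - m) - k) (Y m (l + (R - m) - k))))"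
      by (simp add: sg_sum[symmetric] sg_neg)
    also have "\<dots> = - (\<Sum>k<R - m. T m k)"
    proof (rule arg_cong[where f=uminus], rule sum.cong[OF refl])
      fix k assume k: "k \<in> {..<R - m}"
      have e: "l + (R - m) - (l + (R - m) - k) = k" using k by auto
      have e3: "l + (R - m) - k = l + R - (m + k)" using k m by auto
      have e5: "R - m + (l + R - (m + k)) = (l + k) + 2 * (R - m - k)" using k m by auto
      have e4: "even (R - m + (l + R - (m + k))) = even (l + k)" unfolding e5 by simp
      have "Y m (l + (R - m) - k) = d (l + R - (m + k)) (P - int m - int k) (Q - int m + 1 - int k)
          (d k (P - int m) (Q - int m) (b m))"
        unfolding Y_def e by (simp only: e3)
      then show "sg (R - m) (sg (l + (R - m) - k) (Y m (l + (R - m) - k))) = T m k"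
        unfolding T_def sg_sg e3 using sg_par[OF e4] by simp
    qed
    finally show "(\<Sum>i\<le>l. sg (R - m) (sg i (Y m i))) = - (\<Sum>k<R - m. T m k)" .
  qed
  also have "\<dots> = - (\<Sum>t<R. \<Sum>k\<le>t. T (t - k) k)"
    by (simp add: sum_negf sum_tri_swap)
  also have "\<dots> = 0"
  proof -
    have "(\<Sum>k\<le>t. T (t - k) k) = 0" if t: "t < R" for t
    proof -
      have mem: "sg k (d k (P - int (t - k)) (Q - int (t - k)) (b (t - k))) \<in> A (P - int t) (Q + 1 - int t)"
        if "k \<in> {..t}" for k
        using that t by (intro Asg dA'[OF bA]) (auto simp: of_nat_diff)
      have "(\<Sum>k\<le>t. T (t - k) k) = sg l (d (l + R - t) (P - int t) (Q + 1 - int t) (Ds P Q b t))"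
        unfolding Ds_def using mem
        apply (simp only: dsum[OF finite_atMost mem] sg_sum)
        apply (rule sum.cong[OF refl])
      proof -
        fix k assume k: "k \<in> {..t}"
        have m: "d k (P - int (t - k)) (Q - int (t - k)) (b (t - k)) \<in> A (P - int t) (Q + 1 - int t)"
          using t k by (intro dA'[OF bA]) (auto simp: of_nat_diff)
        have f1: "l + R - (t - k + k) = l + R - t" using k by simp
        have f2: "P - int (t - k) - int k = P - int t" "Q - int (t - k) + 1 - int k = Q + 1 - int t"
          using k by (auto simp: of_nat_diff)
        show "T (t - k) k = sg l (d (l + R - t) (P - int t) (Q + 1 - int t) (sg k (d k (P - int (t - k)) (Q - int (t - k)) (b (t - k)))))"
          unfolding dsg[OF m] sg_sg T_def f1 f2 ..
      qed
      then show ?thesis using bc[OF t] by simp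
    qed
    then show ?thesis by simp
  qed
  finally show ?thesis .
qed

end



lemma sum_atMost_0_split:
  fixes f :: "nat \<Rightarrow> 'a::comm_monoid_add"
  shows "(\<Sum>i\<le>k. f i) = f 0 + (\<Sum>i\<in>{1..k}. f i)"
proof -
  have "{..k} = insert 0 {1..k}" by auto
  then show ?thesis by simp
qed

lemma sum_lessThan_0_split:
  fixes f :: "nat \<Rightarrow> 'a::comm_monoid_add"
  assumes "k \<ge> 1"
  shows "(\<Sum>i<k. f i) = f 0 + (\<Sum>i\<in>{1..k-1}. f i)"
proof -
  have "{..<k} = insert 0 {1..k-1}" using assms by auto
  then show ?thesis by simp
qed

context MC begin

lemma Ds_cong: "(\<And>j. j \<le> l \<Longrightarrow> s j = s' j) \<Longrightarrow> Ds P Q s l = Ds P Q s' l"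
  unfolding Ds_def by (intro sum.cong) auto

lemma Ds_add:
  assumes "\<And>j. j \<le> l \<Longrightarrow> s j \<in> A (P - int j) (Q - int j)"
      and "\<And>j. j \<le> l \<Longrightarrow> t j \<in> A (P - int j) (Q - int j)"
  shows "Ds P Q (\<lambda>j. s j + t j) l = Ds P Q s l + Ds P Q t l"
  unfolding Ds_def sum.distrib[symmetric]
proof (intro sum.cong refl)
  fix i assume i: "i \<in> {..l}"
  have "s (l - i) \<in> A (P - int (l - i)) (Q - int (l - i))" "t (l - i) \<in> A (P - int (l - i)) (Q - int (l - i))"
    using assms(1)[of "l - i"] assms(2)[of "l - i"] i by auto
  then show "sg i (d i (P - int (l - i)) (Q - int (l - i)) (s (l - i) + t (l - i))) =
    sg i (d i (P - int (l - i)) (Q - int (l - i)) (s (l - i))) + sg i (d i (P - int (l - i)) (Q - int (l - i)) (t (l - i)))"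
    by (simp only: dadd sg_add)
qed

lemma Ds_diff:
  assumes "\<And>j. j \<le> l \<Longrightarrow> s j \<in> A (P - int j) (Q - int j)"
      and "\<And>j. j \<le> l \<Longrightarrow> t j \<in> A (P - int j) (Q - int j)"
  shows "Ds P Q (\<lambda>j. s j - t j) l = Ds P Q s l - Ds P Q t l"
  unfolding Ds_def sum_subtractf[symmetric]
proof (intro sum.cong refl)
  fix i assume i: "i \<in> {..l}"
  have "s (l - i) \<in> A (P - int (l - i)) (Q - int (l - i))" "t (l - i) \<in> A (P - int (l - i)) (Q - int (l - i))"
    using assms(1)[of "l - i"] assms(2)[of "l - i"] i by auto
  then show "sg i (d i (P - int (l - i)) (Q - int (l - i)) (s (l - i) - t (l - i))) =
    sg i (d i (P - int (l - i)) (Q - int (l - i)) (s (l - i))) - sg i (d i (P - int (l - i)) (Q - int (l - i)) (t (l - i)))"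
    by (simp only: ddiff sg_diff)
qed

lemma Ds_zero: "Ds P Q (\<lambda>j. 0) l = 0"
  unfolding Ds_def by simp

lemma Ds_shift0: "Ds P Q (\<lambda>j. if j = 0 then 0 else c (j - 1)) 0 = 0"
  unfolding Ds_def by simp

lemma Ds_shift:
  "Ds P Q (\<lambda>j. if j = 0 then 0 else c (j - 1)) (Suc l) = Ds (P - 1) (Q - 1) c l"
proof -
  have "Ds P Q (\<lambda>j. if j = 0 then 0 else c (j - 1)) (Suc l)
     = (\<Sum>i\<le>l. sg i (d i (P - int (Suc l - i)) (Q - int (Suc l - i)) (if Suc l - i = 0 then 0 else c (Suc l - i - 1))))
       + sg (Suc l) (d (Suc l) (P - int (Suc l - Suc l)) (Q - int (Suc l - Suc l)) (if Suc l - Suc l = 0 then 0 else c (Suc l - Suc l - 1)))"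
    unfolding Ds_def by (simp only: sum.atMost_Suc)
  also have "\<dots> = Ds (P - 1) (Q - 1) c l"
    unfolding Ds_def
    by (auto intro!: sum.cong simp: of_nat_diff Suc_diff_le algebra_simps)
  finally show ?thesis .
qed

lemma Ds_dseq: "x \<in> A P (Q - 1) \<Longrightarrow> Ds P Q (\<lambda>j. d j P (Q - 1) x) l = 0"
  using ident[of x P "Q - 1" l] unfolding Ds_def by simp

lemma ZW_iff: "a \<in> ZW A d r p q \<longleftrightarrow> (\<forall>i<max r 1. a i \<in> A (p - int i) (q - int i)) \<and>
   (\<forall>i. max r 1 \<le> i \<longrightarrow> a i = 0) \<and> (\<forall>l<r. Ds p q a l = 0)"
  unfolding ZW_def Ds_def by simp

lemma ZW_mem: "a i \<in> A (p - int i) (q - int i)" if "a \<in> ZW A d r p q"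
proof (cases "i < max r 1")
  case True
  then show ?thesis using that unfolding ZW_iff by auto
next
  case False
  then have "a i = 0" using that unfolding ZW_iff by (metis not_less)
  then show ?thesis by simp
qed

definition Uf :: "nat \<Rightarrow> int \<Rightarrow> int \<Rightarrow> (nat \<Rightarrow> 'a) \<Rightarrow> 'a \<Rightarrow> nat \<Rightarrow> 'a" where
  "Uf r p q b a' j = d j p (q - 1) a' + (\<Sum>m<r-1. sg (r - 1 - m) (d (r - 1 - m + j) (p + int r - 1 - int m) (q - 1 + int r - 1 - int m) (b m)))"

lemma Uf_mem:
  assumes r: "r \<ge> 1" and a': "a' \<in> A p (q - 1)"
    and b: "\<And>m. m < r - 1 \<Longrightarrow> b m \<in> A (p + int r - 1 - int m) (q - 1 + int r - 1 - int m)"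
  shows "Uf r p q b a' j \<in> A (p - int j) (q - int j)"
  unfolding Uf_def
  using r by (intro Aadd dA'[OF a'] Asum Asg dA'[OF b]) (auto simp: of_nat_diff)

lemma Uf_cycle:
  assumes r: "r \<ge> 1" and a': "a' \<in> A p (q - 1)"
    and b: "\<And>m. m < r - 1 \<Longrightarrow> b m \<in> A (p + int r - 1 - int m) (q - 1 + int r - 1 - int m)"
    and bc: "\<And>t. t < r - 1 \<Longrightarrow> Ds (p + int r - 1) (q - 1 + int r - 1) b t = 0"
  shows "Ds p q (Uf r p q b a') l = 0"
proof -
  define Vb where "Vb j = (\<Sum>m<r-1. sg (r - 1 - m) (d (r - 1 - m + j) (p + int r - 1 - int m) (q - 1 + int r - 1 - int m) (b m)))" for j
  have "Ds p q Vb l = 0"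
    by (rule G[where R="r - 1" and b=b and P="p + int r - 1" and Q="q - 1 + int r - 1"])
       (use r b bc in \<open>auto simp: Vb_def of_nat_diff\<close>)
  moreover have "Ds p q (\<lambda>j. d j p (q - 1) a') l = 0" using Ds_dseq[OF a'] .
  moreover have vm: "d (r - 1 - m + j) (p + int r - 1 - int m) (q - 1 + int r - 1 - int m) (b m) \<in> A (p - int j) (q - int j)"
    if "m \<in> {..<r-1}" for m j
    using that r by (intro dA'[OF b]) (auto simp: of_nat_diff)
  moreover have "Ds p q (Uf r p q b a') l = Ds p q (\<lambda>j. d j p (q - 1) a') l + Ds p q Vb l"
    unfolding Uf_def Vb_def[symmetric]
  proof (rule Ds_add)
    fix j show "d j p (q - 1) a' \<in> A (p - int j) (q - int j)" by (rule dA'[OF a']) auto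
    show "Vb j \<in> A (p - int j) (q - int j)" unfolding Vb_def by (intro Asum Asg vm)
  qed
  ultimately show ?thesis by simp
qed

end



context MC begin

lemma w_reidx:
  assumes r: "r \<ge> 2" and j: "j < r"
  shows "sg j (\<Sum>i\<in>{j+1..r+j-1}. sg i (d i (p - int j + int i) (q - 1 - int j + int i) (b (r + j - 1 - i))))
   = (\<Sum>m<r-1. sg (r - 1 - m) (d (r - 1 - m + j) (p + int r - 1 - int m) (q - 1 + int r - 1 - int m) (b m)))"
  unfolding sg_sum
proof (rule sum.reindex_bij_witness[where i="\<lambda>m. r - 1 - m + j" and j="\<lambda>i. r + j - 1 - i"])
  fix i assume i: "i \<in> {j+1..r+j-1}"
  have e1: "r - 1 - (r + j - 1 - i) + j = i" using i r by auto
  have e2: "p + int r - 1 - int (r + j - 1 - i) = p - int j + int i"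
    "q - 1 + int r - 1 - int (r + j - 1 - i) = q - 1 - int j + int i" using i r by (auto simp: of_nat_diff)
  have e3: "even (r - 1 - (r + j - 1 - i)) = even (j + i)"
  proof -
    have "r - 1 - (r + j - 1 - i) + 2 * j = j + i" using i r by auto
    then show ?thesis by (metis even_add even_mult_iff even_numeral)
  qed
  show "sg (r - 1 - (r + j - 1 - i)) (d (r - 1 - (r + j - 1 - i) + j) (p + int r - 1 - int (r + j - 1 - i))
         (q - 1 + int r - 1 - int (r + j - 1 - i)) (b (r + j - 1 - i))) =
       sg j (sg i (d i (p - int j + int i) (q - 1 - int j + int i) (b (r + j - 1 - i))))"
    unfolding e1 e2 sg_sg using sg_par[OF e3] by simp
qed (use r j in auto)

lemma w_eq:
  assumes r: "r \<ge> 1" and j: "j < r"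
  shows "w A d r p q (b, a', c) j = Uf r p q b a' j + (if j = 0 then 0 else c (j - 1))"
proof (cases "r = 1")
  case True
  then show ?thesis using j by (simp add: w_def Uf_def)
next
  case False
  then have r2: "r \<ge> 2" using r by auto
  show ?thesis
    using False r j w_reidx[OF r2 j, of p q b] unfolding w_def Uf_def by simp
qed

lemma w_zero: "j \<ge> r \<Longrightarrow> w A d r p q x j = 0"
  unfolding w_def by (auto split: prod.splits)

lemma BW_facts:
  assumes r: "r \<ge> 1" and x: "(b, a', c) \<in> BW A d r p (q - 1)"
  shows "a' \<in> A p (q - 1)"
    and "\<And>m. m < r - 1 \<Longrightarrow> b m \<in> A (p + int r - 1 - int m) (q - 1 + int r - 1 - int m)"
    and "\<And>t. t < r - 1 \<Longrightarrow> Ds (p + int r - 1) (q - 1 + int r - 1) b t = 0"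
    and "\<And>j. c j \<in> A (p - 1 - int j) (q - 1 - int j)"
    and "\<And>t. t < r - 1 \<Longrightarrow> Ds (p - 1) (q - 1) c t = 0"
proof -
  show "a' \<in> A p (q - 1)" using x r unfolding BW_def by (auto split: if_splits)
  fix m assume "m < r - 1"
  then have r2: "r \<noteq> 1" "r \<noteq> 0" by auto
  then have "b \<in> ZW A d (r - 1) (p + int r - 1) (q - 1 + int r - 1)" using x unfolding BW_def by auto
  then show "b m \<in> A (p + int r - 1 - int m) (q - 1 + int r - 1 - int m)" by (rule ZW_mem)
next
  fix t assume t: "t < r - 1"
  then have r2: "r \<noteq> 1" "r \<noteq> 0" by auto
  then have "b \<in> ZW A d (r - 1) (p + int r - 1) (q - 1 + int r - 1)" using x unfolding BW_def by auto
  then show "Ds (p + int r - 1) (q - 1 + int r - 1) b t = 0" using t unfolding ZW_iff by auto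
next
  fix j
  show "c j \<in> A (p - 1 - int j) (q - 1 - int j)"
  proof (cases "r = 1")
    case True then have "c = (\<lambda>_. 0)" using x unfolding BW_def by auto
    then show ?thesis by simp
  next
    case False
    then have "c \<in> ZW A d (r - 1) (p - 1) (q - 1)" using x r unfolding BW_def by auto
    then show ?thesis by (rule ZW_mem)
  qed
next
  fix t assume t: "t < r - 1"
  then have r2: "r \<noteq> 1" "r \<noteq> 0" by auto
  then have "c \<in> ZW A d (r - 1) (p - 1) (q - 1)" using x unfolding BW_def by auto
  then show "Ds (p - 1) (q - 1) c t = 0" using t unfolding ZW_iff by auto
qed

lemma shift_mem:
  assumes c: "\<And>j. c j \<in> A (p - 1 - int j) (q - 1 - int j)"
  shows "(if j = 0 then 0 else c (j - 1)) \<in> A (p - int j) (q - int j)"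
proof (cases "j = 0")
  case False
  have "p - 1 - int (j - 1) = p - int j" "q - 1 - int (j - 1) = q - int j" using False by (auto simp: of_nat_diff)
  then show ?thesis using c[of "j - 1"] False by simp
qed simp

lemma Wseq_ZW:
  assumes r: "r \<ge> 1"
    and W: "\<And>j. j < r \<Longrightarrow> W j = U j + (if j = 0 then 0 else c (j - 1))"
    and W0: "\<And>j. j \<ge> r \<Longrightarrow> W j = 0"
    and U: "\<And>j. U j \<in> A (p - int j) (q - int j)"
    and Uc: "\<And>l. Ds p q U l = 0"
    and c: "\<And>j. c j \<in> A (p - 1 - int j) (q - 1 - int j)"
    and cc: "\<And>t. t < r - 1 \<Longrightarrow> Ds (p - 1) (q - 1) c t = 0"
  shows "W \<in> ZW A d r p q"
  unfolding ZW_iff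
proof (intro conjI allI impI)
  have mr: "max r 1 = r" using r by simp
  fix i assume "i < max r 1"
  then have "i < r" using mr by simp
  then have "W i = U i + (if i = 0 then 0 else c (i - 1))" using W by simp
  then show "W i \<in> A (p - int i) (q - int i)" using Aadd[OF U[of i] shift_mem[OF c, of i]] by simp
next
  fix i assume "max r 1 \<le> i" then show "W i = 0" using W0 by simp
next
  fix l assume l: "l < r"
  have "Ds p q W l = Ds p q (\<lambda>j. U j + (if j = 0 then 0 else c (j - 1))) l"
    using l W by (intro Ds_cong) auto
  also have "\<dots> = Ds p q U l + Ds p q (\<lambda>j. if j = 0 then 0 else c (j - 1)) l"
    by (rule Ds_add) (use U shift_mem[OF c] in auto)
  also have "\<dots> = 0"
  proof (cases l)
    case 0 then show ?thesis using Uc Ds_shift0 by simp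
  next
    case (Suc l')
    then show ?thesis using Uc Ds_shift cc l by simp
  qed
  finally show "Ds p q W l = 0" .
qed

lemma BrI:
  assumes "r \<ge> 1" "x \<in> A p q"
    and "\<And>i. i < r \<Longrightarrow> bb i \<in> A (p + int r - 1 - int i) (q + int r - 2 - int i)"
    and "x = (\<Sum>i<r. sg i (d i (p + int i) (q + int i - 1) (bb (r - 1 - i))))"
    and "\<And>l. l + 2 \<le> r \<Longrightarrow>
           (\<Sum>i\<le>l. sg i (d i (p + int r - 1 - int l + int i) (q + int r - 2 - int l + int i) (bb (l - i)))) = 0"
  shows "x \<in> Br A d r p q"
  using assms unfolding Br_def by auto

lemma Br_mem: "x \<in> Br A d r p q \<Longrightarrow> x \<in> A p q"
  unfolding Br_def by (auto split: if_splits)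

end



context MC begin

lemma delta0_Br:
  assumes r: "r \<ge> 1"
    and W: "\<And>j. j < r \<Longrightarrow> W j = U j + (if j = 0 then 0 else c (j - 1))"
    and U: "\<And>j. U j \<in> A (p - int j) (q - int j)"
    and Uc: "\<And>l. Ds p q U l = 0"
    and c: "\<And>j. c j \<in> A (p - 1 - int j) (q - 1 - int j)"
    and cc: "\<And>t. t < r - 1 \<Longrightarrow> Ds (p - 1) (q - 1) c t = 0"
  shows "delta d r p q W 0 \<in> Br A d r (p - int r) (q + 1 - int r)"
proof -
  define sc where "sc j = (if j = 0 then 0 else c (j - 1))" for j
  have scm: "sc j \<in> A (p - int j) (q - int j)" for j unfolding sc_def by (rule shift_mem[OF c])
  define T1 where "T1 i = sg i (d i (p - int r + int i) (q - int r + int i) (U (r - i)))" for i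
  define T2 where "T2 i = sg i (d i (p - int r + int i) (q - int r + int i) (c (r - 1 - i)))" for i
  have degs: "p - int (r - i) = p - int r + int i" "q - int (r - i) = q - int r + int i" if "i \<le> r" for i
    using that by (auto simp: of_nat_diff)
  have Um: "U (r - i) \<in> A (p - int r + int i) (q - int r + int i)" if "i \<le> r" for i
    using U[of "r - i"] by (simp only: degs[OF that])
  have scm': "sc (r - i) \<in> A (p - int r + int i) (q - int r + int i)" if "i \<le> r" for i
    using scm[of "r - i"] by (simp only: degs[OF that])
  have cm: "c (r - 1 - i) \<in> A (p - int r + int i) (q - int r + int i)" if "1 \<le> i" "i < r" for i
  proof -
    have e: "p - 1 - int (r - 1 - i) = p - int r + int i" "q - 1 - int (r - 1 - i) = q - int r + int i"
      using that by (auto simp: of_nat_diff)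
    show ?thesis using c[of "r - 1 - i"] by (simp only: e)
  qed
  have "delta d r p q W 0 = (\<Sum>i\<in>{1..r}. sg i (d i (p - int r + int i) (q - int r + int i) (W (r - i))))"
    using r unfolding delta_def by simp
  also have "\<dots> = (\<Sum>i\<in>{1..r}. T1 i + sg i (d i (p - int r + int i) (q - int r + int i) (sc (r - i))))"
  proof (rule sum.cong[OF refl])
    fix i assume i: "i \<in> {1..r}"
    then have "W (r - i) = U (r - i) + sc (r - i)" using W[of "r - i"] unfolding sc_def by auto
    then show "sg i (d i (p - int r + int i) (q - int r + int i) (W (r - i))) =
       T1 i + sg i (d i (p - int r + int i) (q - int r + int i) (sc (r - i)))"
      unfolding T1_def using i by (simp add: dadd Um scm' sg_add)
  qed
  also have "\<dots> = (\<Sum>i\<in>{1..r}. T1 i) + (\<Sum>i\<in>{1..r-1}. T2 i)"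
  proof -
    have s1: "{1..r} = insert r {1..r-1}" using r by auto
    have "(\<Sum>i\<in>{1..r}. sg i (d i (p - int r + int i) (q - int r + int i) (sc (r - i))))
        = (\<Sum>i\<in>{1..r-1}. sg i (d i (p - int r + int i) (q - int r + int i) (sc (r - i))))"
      unfolding s1 using r by (subst sum.insert) (auto simp: sc_def)
    also have "\<dots> = (\<Sum>i\<in>{1..r-1}. T2 i)"
      unfolding T2_def sc_def by (intro sum.cong) auto
    finally show ?thesis by (simp add: sum.distrib)
  qed
  also have "(\<Sum>i\<in>{1..r}. T1 i) = - d 0 (p - int r) (q - int r) (U r)"
  proof -
    have "0 = Ds p q U r" using Uc by simp
    also have "\<dots> = d 0 (p - int r) (q - int r) (U r) + (\<Sum>i\<in>{1..r}. T1 i)"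
      unfolding Ds_def sum_atMost_0_split T1_def
      by (intro arg_cong2[where f="(+)"] refl sum.cong) (simp_all only: degs atLeastAtMost_iff diff_zero of_nat_0 sg_0)
    finally show ?thesis by (simp add: eq_neg_iff_add_eq_0 add.commute)
  qed
  finally have dl: "delta d r p q W 0 = - d 0 (p - int r) (q - int r) (U r) + (\<Sum>i\<in>{1..r-1}. T2 i)" .
  define bb where "bb i = (if i < r - 1 then c i else - U r)" for i
  show ?thesis
  proof (rule BrI)
    show "1 \<le> r" by (rule r)
    have m1: "d 0 (p - int r) (q - int r) (U r) \<in> A (p - int r) (q + 1 - int r)"
      using U[of r] by (rule dA') auto
    have m2: "T2 i \<in> A (p - int r) (q + 1 - int r)" if "i \<in> {1..r-1}" for i
      unfolding T2_def using that by (intro Asg dA'[OF cm]) auto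
    show "delta d r p q W 0 \<in> A (p - int r) (q + 1 - int r)"
      unfolding dl by (intro Aadd Aneg m1 Asum m2)
  next
    fix i assume i: "i < r"
    show "bb i \<in> A (p - int r + int r - 1 - int i) (q + 1 - int r + int r - 2 - int i)"
    proof (cases "i < r - 1")
      case True
      then show ?thesis using c[of i] by (simp add: bb_def)
    next
      case False
      then have "i = r - 1" using i by auto
      then have e: "p - int r + int r - 1 - int i = p - int r" "q + 1 - int r + int r - 2 - int i = q - int r"
        using r by (auto simp: of_nat_diff)
      have "bb i = - U r" using False by (simp add: bb_def)
      then show ?thesis unfolding e using Aneg[OF U[of r]] by simp
    qed
  next
    have "(\<Sum>i<r. sg i (d i (p - int r + int i) (q + 1 - int r + int i - 1) (bb (r - 1 - i))))
      = d 0 (p - int r) (q - int r) (- U r) + (\<Sum>i\<in>{1..r-1}. T2 i)"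
      unfolding sum_lessThan_0_split[OF r] T2_def
      by (auto intro!: sum.cong simp: bb_def algebra_simps)
    also have "\<dots> = delta d r p q W 0"
      unfolding dl using U[of r] by (simp add: dneg)
    finally show "delta d r p q W 0 = (\<Sum>i<r. sg i (d i (p - int r + int i) (q + 1 - int r + int i - 1) (bb (r - 1 - i))))" ..
  next
    fix l assume l: "l + 2 \<le> r"
    have "(\<Sum>i\<le>l. sg i (d i (p - int r + int r - 1 - int l + int i) (q + 1 - int r + int r - 2 - int l + int i) (bb (l - i))))
       = Ds (p - 1) (q - 1) c l"
      unfolding Ds_def
    proof (rule sum.cong[OF refl])
      fix i assume i: "i \<in> {..l}"
      then have "l - i < r - 1" using l by simp
      then have e0: "bb (l - i) = c (l - i)" by (simp add: bb_def)
      have e: "p - int r + int r - 1 - int l + int i = p - 1 - int (l - i)"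
         "q + 1 - int r + int r - 2 - int l + int i = q - 1 - int (l - i)" using i by (auto simp: of_nat_diff)
      show "sg i (d i (p - int r + int r - 1 - int l + int i) (q + 1 - int r + int r - 2 - int l + int i) (bb (l - i))) =
        sg i (d i (p - 1 - int (l - i)) (q - 1 - int (l - i)) (c (l - i)))" by (simp only: e e0)
    qed
    also have "\<dots> = 0" using cc l by simp
    finally show "(\<Sum>i\<le>l. sg i (d i (p - int r + int r - 1 - int l + int i) (q + 1 - int r + int r - 2 - int l + int i) (bb (l - i)))) = 0" .
  qed
qed

end



context MC begin

lemma Br_0: "0 \<in> Br A d r p q"
  unfolding Br_def by (auto intro!: exI[of _ "\<lambda>_. 0"])

lemma Br_add: assumes x: "x \<in> Br A d r p q" and y: "y \<in> Br A d r p q"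
  shows "x + y \<in> Br A d r p q"
proof (cases "r = 0")
  case True then show ?thesis using x y unfolding Br_def by simp
next
  case False
  from x False obtain b where xA: "x \<in> A p q"
    and b: "\<forall>i<r. b i \<in> A (p + int r - 1 - int i) (q + int r - 2 - int i)"
    and xb: "x = (\<Sum>i<r. sg i (d i (p + int i) (q + int i - 1) (b (r - 1 - i))))"
    and bc: "\<forall>l. l + 2 \<le> r \<longrightarrow> (\<Sum>i\<le>l. sg i (d i (p + int r - 1 - int l + int i) (q + int r - 2 - int l + int i) (b (l - i)))) = 0"
    unfolding Br_def by auto
  from y False obtain b' where yA: "y \<in> A p q"
    and b': "\<forall>i<r. b' i \<in> A (p + int r - 1 - int i) (q + int r - 2 - int i)"
    and yb: "y = (\<Sum>i<r. sg i (d i (p + int i) (q + int i - 1) (b' (r - 1 - i))))"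
    and bc': "\<forall>l. l + 2 \<le> r \<longrightarrow> (\<Sum>i\<le>l. sg i (d i (p + int r - 1 - int l + int i) (q + int r - 2 - int l + int i) (b' (l - i)))) = 0"
    unfolding Br_def by auto
  have m1: "b (r - 1 - i) \<in> A (p + int i) (q + int i - 1)" "b' (r - 1 - i) \<in> A (p + int i) (q + int i - 1)" if "i < r" for i
  proof -
    have e: "p + int r - 1 - int (r - 1 - i) = p + int i" "q + int r - 2 - int (r - 1 - i) = q + int i - 1"
      using that by (auto simp: of_nat_diff)
    have lt: "r - 1 - i < r" using that by auto
    have "b (r - 1 - i) \<in> A (p + int r - 1 - int (r - 1 - i)) (q + int r - 2 - int (r - 1 - i))" using b lt by blast
    then show "b (r - 1 - i) \<in> A (p + int i) (q + int i - 1)" by (simp only: e)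
    have "b' (r - 1 - i) \<in> A (p + int r - 1 - int (r - 1 - i)) (q + int r - 2 - int (r - 1 - i))" using b' lt by blast
    then show "b' (r - 1 - i) \<in> A (p + int i) (q + int i - 1)" by (simp only: e)
  qed
  have m2: "b (l - i) \<in> A (p + int r - 1 - int l + int i) (q + int r - 2 - int l + int i)"
     "b' (l - i) \<in> A (p + int r - 1 - int l + int i) (q + int r - 2 - int l + int i)" if "i \<le> l" "l + 2 \<le> r" for i l
  proof -
    have e: "p + int r - 1 - int (l - i) = p + int r - 1 - int l + int i" "q + int r - 2 - int (l - i) = q + int r - 2 - int l + int i"
      using that by (auto simp: of_nat_diff)
    have "l - i < r" using that by auto
    then show "b (l - i) \<in> A (p + int r - 1 - int l + int i) (q + int r - 2 - int l + int i)"
      "b' (l - i) \<in> A (p + int r - 1 - int l + int i) (q + int r - 2 - int l + int i)"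
      using b b' e by metis+
  qed
  show ?thesis
  proof (rule BrI[where bb="\<lambda>i. b i + b' i"])
    show "1 \<le> r" using False by simp
    show "x + y \<in> A p q" using xA yA by blast
    show "b i + b' i \<in> A (p + int r - 1 - int i) (q + int r - 2 - int i)" if "i < r" for i using b b' that by blast
    show "x + y = (\<Sum>i<r. sg i (d i (p + int i) (q + int i - 1) (b (r - 1 - i) + b' (r - 1 - i))))"
      unfolding xb yb sum.distrib[symmetric]
    proof (intro sum.cong refl)
      fix i assume "i \<in> {..<r}"
      then have "i < r" by simp
      show "sg i (d i (p + int i) (q + int i - 1) (b (r - 1 - i))) + sg i (d i (p + int i) (q + int i - 1) (b' (r - 1 - i)))
        = sg i (d i (p + int i) (q + int i - 1) (b (r - 1 - i) + b' (r - 1 - i)))"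
        by (simp only: dadd[OF m1(1)[OF \<open>i < r\<close>] m1(2)[OF \<open>i < r\<close>]] sg_add)
    qed
    fix l assume l: "l + 2 \<le> r"
    show "(\<Sum>i\<le>l. sg i (d i (p + int r - 1 - int l + int i) (q + int r - 2 - int l + int i) (b (l - i) + b' (l - i)))) = 0"
    proof -
      have "(\<Sum>i\<le>l. sg i (d i (p + int r - 1 - int l + int i) (q + int r - 2 - int l + int i) (b (l - i) + b' (l - i))))
        = (\<Sum>i\<le>l. sg i (d i (p + int r - 1 - int l + int i) (q + int r - 2 - int l + int i) (b (l - i))))
        + (\<Sum>i\<le>l. sg i (d i (p + int r - 1 - int l + int i) (q + int r - 2 - int l + int i) (b' (l - i))))"
        unfolding sum.distrib[symmetric]
      proof (intro sum.cong refl)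
        fix i assume "i \<in> {..l}"
        then have i: "i \<le> l" by simp
        show "sg i (d i (p + int r - 1 - int l + int i) (q + int r - 2 - int l + int i) (b (l - i) + b' (l - i))) =
          sg i (d i (p + int r - 1 - int l + int i) (q + int r - 2 - int l + int i) (b (l - i))) +
          sg i (d i (p + int r - 1 - int l + int i) (q + int r - 2 - int l + int i) (b' (l - i)))"
          by (simp only: dadd[OF m2(1)[OF i l] m2(2)[OF i l]] sg_add)
      qed
      then show "(\<Sum>i\<le>l. sg i (d i (p + int r - 1 - int l + int i) (q + int r - 2 - int l + int i) (b (l - i) + b' (l - i)))) = 0"
        using bc bc' l by simp
    qed
  qed
qed

lemma Br_neg: assumes x: "x \<in> Br A d r p q"
  shows "- x \<in> Br A d r p q"
proof (cases "r = 0")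
  case True then show ?thesis using x unfolding Br_def by simp
next
  case False
  from x False obtain b where xA: "x \<in> A p q"
    and b: "\<forall>i<r. b i \<in> A (p + int r - 1 - int i) (q + int r - 2 - int i)"
    and xb: "x = (\<Sum>i<r. sg i (d i (p + int i) (q + int i - 1) (b (r - 1 - i))))"
    and bc: "\<forall>l. l + 2 \<le> r \<longrightarrow> (\<Sum>i\<le>l. sg i (d i (p + int r - 1 - int l + int i) (q + int r - 2 - int l + int i) (b (l - i)))) = 0"
    unfolding Br_def by auto
  have m1: "b (r - 1 - i) \<in> A (p + int i) (q + int i - 1)" if "i < r" for i
  proof -
    have e: "p + int r - 1 - int (r - 1 - i) = p + int i" "q + int r - 2 - int (r - 1 - i) = q + int i - 1"
      using that by (auto simp: of_nat_diff)
    have lt: "r - 1 - i < r" using that by auto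
    have "b (r - 1 - i) \<in> A (p + int r - 1 - int (r - 1 - i)) (q + int r - 2 - int (r - 1 - i))" using b lt by blast
    then show "b (r - 1 - i) \<in> A (p + int i) (q + int i - 1)" by (simp only: e)
  qed
  have m2: "b (l - i) \<in> A (p + int r - 1 - int l + int i) (q + int r - 2 - int l + int i)" if "i \<le> l" "l + 2 \<le> r" for i l
  proof -
    have e: "p + int r - 1 - int (l - i) = p + int r - 1 - int l + int i" "q + int r - 2 - int (l - i) = q + int r - 2 - int l + int i"
      using that by (auto simp: of_nat_diff)
    have "l - i < r" using that by auto
    then show ?thesis using b e by metis
  qed
  show ?thesis
  proof (rule BrI[where bb="\<lambda>i. - b i"])
    show "1 \<le> r" using False by simp
    show "- x \<in> A p q" using xA by blast
    show "- b i \<in> A (p + int r - 1 - int i) (q + int r - 2 - int i)" if "i < r" for i using b that by blast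
    show "- x = (\<Sum>i<r. sg i (d i (p + int i) (q + int i - 1) (- b (r - 1 - i))))"
      unfolding xb sum_negf[symmetric]
    proof (intro sum.cong refl)
      fix i assume "i \<in> {..<r}"
      then have "i < r" by simp
      show "- sg i (d i (p + int i) (q + int i - 1) (b (r - 1 - i)))
        = sg i (d i (p + int i) (q + int i - 1) (- b (r - 1 - i)))"
        by (simp only: dneg[OF m1[OF \<open>i < r\<close>]] sg_neg)
    qed
    fix l assume l: "l + 2 \<le> r"
    show "(\<Sum>i\<le>l. sg i (d i (p + int r - 1 - int l + int i) (q + int r - 2 - int l + int i) (- b (l - i)))) = 0"
    proof -
      have "(\<Sum>i\<le>l. sg i (d i (p + int r - 1 - int l + int i) (q + int r - 2 - int l + int i) (- b (l - i))))
        = - (\<Sum>i\<le>l. sg i (d i (p + int r - 1 - int l + int i) (q + int r - 2 - int l + int i) (b (l - i))))"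
        unfolding sum_negf[symmetric]
      proof (intro sum.cong refl)
        fix i assume "i \<in> {..l}"
        then have i: "i \<le> l" by simp
        show "sg i (d i (p + int r - 1 - int l + int i) (q + int r - 2 - int l + int i) (- b (l - i))) =
          - sg i (d i (p + int r - 1 - int l + int i) (q + int r - 2 - int l + int i) (b (l - i)))"
          by (simp only: dneg[OF m2[OF i l]] sg_neg)
      qed
      then show "(\<Sum>i\<le>l. sg i (d i (p + int r - 1 - int l + int i) (q + int r - 2 - int l + int i) (- b (l - i)))) = 0"
        using bc l by simp
    qed
  qed
qed

lemma Br_diff: "x \<in> Br A d r p q \<Longrightarrow> y \<in> Br A d r p q \<Longrightarrow> x - y \<in> Br A d r p q"
  using Br_add[of x r p q "- y"] Br_neg[of y r p q] by simp

lemma ecl_eq_iff: "ecl A d r p q z = ecl A d r p q z' \<longleftrightarrow> z - z' \<in> Br A d r p q"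
proof
  assume e: "ecl A d r p q z = ecl A d r p q z'"
  have "z \<in> ecl A d r p q z" unfolding ecl_def using Br_0 by (auto intro!: image_eqI[of _ _ 0])
  then have "z \<in> ecl A d r p q z'" using e by simp
  then obtain b where "b \<in> Br A d r p q" "z = z' + b" unfolding ecl_def by auto
  then show "z - z' \<in> Br A d r p q" by (simp add: add_diff_cancel_left')
next
  assume m: "z - z' \<in> Br A d r p q"
  show "ecl A d r p q z = ecl A d r p q z'"
    unfolding ecl_def
  proof (intro set_eqI iffI)
    fix y assume "y \<in> (+) z ` Br A d r p q"
    then obtain b where b: "b \<in> Br A d r p q" "y = z + b" by auto
    then have "y = z' + ((z - z') + b)" by (simp add: algebra_simps)
    moreover have "(z - z') + b \<in> Br A d r p q" using Br_add[OF m b(1)] .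
    ultimately show "y \<in> (+) z' ` Br A d r p q" by blast
  next
    fix y assume "y \<in> (+) z' ` Br A d r p q"
    then obtain b where b: "b \<in> Br A d r p q" "y = z' + b" by auto
    then have "y = z + (b - (z - z'))" by (simp add: algebra_simps)
    moreover have "b - (z - z') \<in> Br A d r p q" using Br_diff[OF b(1) m] .
    ultimately show "y \<in> (+) z ` Br A d r p q" by blast
  qed
qed

lemma ZW_diff: assumes "a \<in> ZW A d r p q" "a' \<in> ZW A d r p q"
  shows "(\<lambda>k. a k - a' k) \<in> ZW A d r p q"
  using assms unfolding ZW_iff
  by (auto simp: Ds_diff ZW_mem[OF assms(1)] ZW_mem[OF assms(2)] Adiff)

end



context MC begin

lemma Zr_ZW: "Zr A d r p q = (\<lambda>a. a 0) ` ZW A d r p q"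
proof (intro set_eqI iffI)
  fix z assume z: "z \<in> Zr A d r p q"
  show "z \<in> (\<lambda>a. a 0) ` ZW A d r p q"
  proof (cases "r = 0")
    case True
    then have "z \<in> A p q" using z unfolding Zr_def by simp
    then have "(\<lambda>k. if k = 0 then z else 0) \<in> ZW A d r p q" using True unfolding ZW_iff by auto
    then show ?thesis by (rule rev_image_eqI) simp
  next
    case False
    from z False obtain a where zA: "z \<in> A p q" and a0: "a 0 = z"
      and am: "\<forall>j\<in>{1..r-1}. a j \<in> A (p - int j) (q - int j)"
      and ac: "\<forall>l<r. (\<Sum>i\<le>l. sg i (d i (p - int (l - i)) (q - int (l - i)) (a (l - i)))) = 0"
      unfolding Zr_def by auto
    define a' where "a' k = (if k < r then a k else 0)" for k
    have "a' \<in> ZW A d r p q" unfolding ZW_iff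
    proof (intro conjI allI impI)
      fix i assume "i < max r 1"
      then show "a' i \<in> A (p - int i) (q - int i)" using False am zA a0 by (cases "i = 0") (auto simp: a'_def)
    next
      fix i assume "max r 1 \<le> i" then show "a' i = 0" by (simp add: a'_def)
    next
      fix l assume l: "l < r"
      have "Ds p q a' l = Ds p q a l" using l by (intro Ds_cong) (auto simp: a'_def)
      then show "Ds p q a' l = 0" using ac l unfolding Ds_def by simp
    qed
    moreover have "a' 0 = z" using False a0 by (simp add: a'_def)
    ultimately show ?thesis by (metis rev_image_eqI)
  qed
next
  fix z assume "z \<in> (\<lambda>a. a 0) ` ZW A d r p q"
  then obtain a where a: "a \<in> ZW A d r p q" and z: "z = a 0" by auto
  have zA: "z \<in> A p q" using ZW_mem[OF a, of 0] z by simp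
  show "z \<in> Zr A d r p q"
  proof (cases "r = 0")
    case True then show ?thesis using zA unfolding Zr_def by simp
  next
    case False
    have "\<forall>j\<in>{1..r-1}. a j \<in> A (p - int j) (q - int j)" using ZW_mem[OF a] by auto
    moreover have "\<forall>l<r. (\<Sum>i\<le>l. sg i (d i (p - int (l - i)) (q - int (l - i)) (a (l - i)))) = 0"
      using a unfolding ZW_iff Ds_def by simp
    ultimately show ?thesis unfolding Zr_def using False zA z by auto
  qed
qed

lemma BW0: "BW A d 0 p q = {((\<lambda>_. 0), 0, (\<lambda>_. 0))}"
  unfolding BW_def by auto

lemma w_0: "w A d 0 p q x = (\<lambda>_. 0)"
  unfolding w_def by (auto split: prod.splits)

lemma w_at0_beta:
  assumes "r \<ge> 1"
  shows "w A d r p q (b, a', c) 0 = beta d r p q (b, a', c)"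
  using assms unfolding w_def beta_def by simp

lemma beta_Br:
  assumes r: "r \<ge> 1" and x: "(b, a', c) \<in> BW A d r p (q - 1)"
  shows "beta d r p q (b, a', c) \<in> Br A d r p q"
proof -
  note F = BW_facts[OF r x]
  have bm: "b (r - 1 - i) \<in> A (p + int i) (q - 1 + int i)" if "1 \<le> i" "i \<le> r - 1" for i
  proof -
    have e: "p + int r - 1 - int (r - 1 - i) = p + int i" "q - 1 + int r - 1 - int (r - 1 - i) = q - 1 + int i"
      using that by (auto simp: of_nat_diff)
    have "r - 1 - i < r - 1" using that by auto
    then show ?thesis using F(2)[of "r - 1 - i"] by (simp only: e)
  qed
  have be: "beta d r p q (b, a', c) = d 0 p (q - 1) a' + (\<Sum>i\<in>{1..r-1}. sg i (d i (p + int i) (q - 1 + int i) (b (r - 1 - i))))"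
    using r unfolding beta_def by auto
  define bb where "bb i = (if i < r - 1 then b i else a')" for i
  show ?thesis
  proof (rule BrI[where bb=bb])
    show "1 \<le> r" by (rule r)
    show "beta d r p q (b, a', c) \<in> A p q" unfolding be
      by (intro Aadd dA'[OF F(1)] Asum Asg dA'[OF bm]) auto
  next
    fix i assume i: "i < r"
    show "bb i \<in> A (p + int r - 1 - int i) (q + int r - 2 - int i)"
    proof (cases "i < r - 1")
      case True
      have e: "q - 1 + int r - 1 - int i = q + int r - 2 - int i" by simp
      show ?thesis using True F(2)[OF True] unfolding bb_def e by simp
    next
      case False
      then have "i = r - 1" using i by auto
      then have e: "p + int r - 1 - int i = p" "q + int r - 2 - int i = q - 1" using r by (auto simp: of_nat_diff)
      show ?thesis unfolding e bb_def using False F(1) by simp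
    qed
  next
    have "(\<Sum>i<r. sg i (d i (p + int i) (q + int i - 1) (bb (r - 1 - i))))
        = d 0 p (q - 1) a' + (\<Sum>i\<in>{1..r-1}. sg i (d i (p + int i) (q - 1 + int i) (b (r - 1 - i))))"
      unfolding sum_lessThan_0_split[OF r] by (auto intro!: sum.cong simp: bb_def algebra_simps)
    then show "beta d r p q (b, a', c) = (\<Sum>i<r. sg i (d i (p + int i) (q + int i - 1) (bb (r - 1 - i))))"
      unfolding be by simp
  next
    fix l assume l: "l + 2 \<le> r"
    have "(\<Sum>i\<le>l. sg i (d i (p + int r - 1 - int l + int i) (q + int r - 2 - int l + int i) (bb (l - i))))
       = Ds (p + int r - 1) (q - 1 + int r - 1) b l"
      unfolding Ds_def
    proof (rule sum.cong[OF refl])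
      fix i assume i: "i \<in> {..l}"
      then have "l - i < r - 1" using l by simp
      then have e0: "bb (l - i) = b (l - i)" by (simp add: bb_def)
      have e: "p + int r - 1 - int l + int i = p + int r - 1 - int (l - i)"
         "q + int r - 2 - int l + int i = q - 1 + int r - 1 - int (l - i)" using i by (auto simp: of_nat_diff)
      show "sg i (d i (p + int r - 1 - int l + int i) (q + int r - 2 - int l + int i) (bb (l - i))) =
        sg i (d i (p + int r - 1 - int (l - i)) (q - 1 + int r - 1 - int (l - i)) (b (l - i)))" by (simp only: e e0)
    qed
    also have "\<dots> = 0" using F(3) l by simp
    finally show "(\<Sum>i\<le>l. sg i (d i (p + int r - 1 - int l + int i) (q + int r - 2 - int l + int i) (bb (l - i)))) = 0" .
  qed
qed

lemma wBW:
  assumes x: "x \<in> BW A d r p (q - 1)"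
  shows "w A d r p q x \<in> ZW A d r p q" "w A d r p q x 0 = beta d r p q x" "beta d r p q x \<in> Br A d r p q"
proof -
  have "w A d r p q x \<in> ZW A d r p q \<and> w A d r p q x 0 = beta d r p q x \<and> beta d r p q x \<in> Br A d r p q"
  proof (cases "r = 0")
    case True
    then have "x = ((\<lambda>_. 0), 0, (\<lambda>_. 0))" using x BW0 by auto
    then show ?thesis using True unfolding ZW_iff by (simp add: w_0 beta_def Br_def)
  next
    case False
    then have r: "r \<ge> 1" by simp
    obtain b a' c where xe: "x = (b, a', c)" by (cases x) auto
    note F = BW_facts[OF r x[unfolded xe]]
    have "w A d r p q x \<in> ZW A d r p q" unfolding xe
    proof (rule Wseq_ZW[where U="Uf r p q b a'" and c=c])
      show "1 \<le> r" by (rule r)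
      fix j
      show "j < r \<Longrightarrow> w A d r p q (b, a', c) j = Uf r p q b a' j + (if j = 0 then 0 else c (j - 1))"
        by (rule w_eq[OF r])
      show "r \<le> j \<Longrightarrow> w A d r p q (b, a', c) j = 0" by (rule w_zero)
      show "Uf r p q b a' j \<in> A (p - int j) (q - int j)" by (rule Uf_mem[OF r F(1) F(2)])
      show "c j \<in> A (p - 1 - int j) (q - 1 - int j)" by (rule F(4))
    next
      fix l show "Ds p q (Uf r p q b a') l = 0" by (rule Uf_cycle[OF r F(1) F(2) F(3)])
    next
      fix t show "t < r - 1 \<Longrightarrow> Ds (p - 1) (q - 1) c t = 0" by (rule F(5))
    qed
    then show ?thesis using w_at0_beta[OF r] beta_Br[OF r x[unfolded xe]] xe by simp
  qed
  then show "w A d r p q x \<in> ZW A d r p q" "w A d r p q x 0 = beta d r p q x" "beta d r p q x \<in> Br A d r p q"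
    by auto
qed

end



context MC begin

lemma hard:
  assumes a: "a \<in> ZW A d r p q" and a0: "a 0 \<in> Br A d r p q"
  shows "a \<in> w A d r p q ` BW A d r p (q - 1)"
proof (cases "r = 0")
  case True
  have "a = (\<lambda>_. 0)"
  proof
    fix k show "a k = 0"
      using a a0 True unfolding ZW_iff Br_def by (cases k) auto
  qed
  then show ?thesis using True BW0 w_0 by auto
next
  case False
  then have r: "r \<ge> 1" by simp
  have mr: "max r 1 = r" using r by simp
  from a0 False obtain bb where
        bbm: "\<forall>i<r. bb i \<in> A (p + int r - 1 - int i) (q + int r - 2 - int i)"
    and a0e: "a 0 = (\<Sum>i<r. sg i (d i (p + int i) (q + int i - 1) (bb (r - 1 - i))))"
    and bbc: "\<forall>l. l + 2 \<le> r \<longrightarrow> (\<Sum>i\<le>l. sg i (d i (p + int r - 1 - int l + int i) (q + int r - 2 - int l + int i) (bb (l - i)))) = 0"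
    unfolding Br_def by auto
  define b where "b m = (if m < r - 1 then bb m else 0)" for m
  define a' where "a' = bb (r - 1)"
  define U where "U = Uf r p q b a'"
  define c where "c k = (if k < r - 1 then a (k + 1) - U (k + 1) else 0)" for k
  have a'm: "a' \<in> A p (q - 1)"
  proof -
    have e: "p + int r - 1 - int (r - 1) = p" "q + int r - 2 - int (r - 1) = q - 1" using r by (auto simp: of_nat_diff)
    have "r - 1 < r" using r by simp
    then have "bb (r - 1) \<in> A (p + int r - 1 - int (r - 1)) (q + int r - 2 - int (r - 1))" using bbm by blast
    then show ?thesis by (simp only: e a'_def)
  qed
  have bm: "b m \<in> A (p + int r - 1 - int m) (q - 1 + int r - 1 - int m)" for m
    using bbm by (auto simp: b_def)
  have bc: "Ds (p + int r - 1) (q - 1 + int r - 1) b t = 0" if t: "t < r - 1" for t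
  proof -
    have "Ds (p + int r - 1) (q - 1 + int r - 1) b t
      = (\<Sum>i\<le>t. sg i (d i (p + int r - 1 - int t + int i) (q + int r - 2 - int t + int i) (bb (t - i))))"
      unfolding Ds_def
    proof (rule sum.cong[OF refl])
      fix i assume i: "i \<in> {..t}"
      then have "t - i < r - 1" using t by simp
      then have e0: "b (t - i) = bb (t - i)" by (simp add: b_def)
      have e: "p + int r - 1 - int (t - i) = p + int r - 1 - int t + int i"
         "q - 1 + int r - 1 - int (t - i) = q + int r - 2 - int t + int i" using i by (auto simp: of_nat_diff)
      show "sg i (d i (p + int r - 1 - int (t - i)) (q - 1 + int r - 1 - int (t - i)) (b (t - i))) =
        sg i (d i (p + int r - 1 - int t + int i) (q + int r - 2 - int t + int i) (bb (t - i)))"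
        by (simp only: e e0)
    qed
    also have "\<dots> = 0" using bbc t by simp
    finally show ?thesis .
  qed
  have Um: "U j \<in> A (p - int j) (q - int j)" for j
    unfolding U_def by (rule Uf_mem[OF r a'm bm])
  have Uc: "Ds p q U l = 0" for l
    unfolding U_def by (rule Uf_cycle[OF r a'm bm bc])
  have U0: "U 0 = a 0"
  proof -
    have "U 0 = w A d r p q (b, a', c) 0" unfolding U_def using w_eq[OF r, of 0 p q b a' c] r by simp
    also have "\<dots> = beta d r p q (b, a', c)" by (rule w_at0_beta[OF r])
    also have "\<dots> = d 0 p (q - 1) a' + (\<Sum>i\<in>{1..r-1}. sg i (d i (p + int i) (q - 1 + int i) (b (r - 1 - i))))"
      using r unfolding beta_def by auto
    also have "\<dots> = a 0"
    proof -
      have s: "(\<Sum>i\<in>{1..r-1}. sg i (d i (p + int i) (q - 1 + int i) (b (r - 1 - i))))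
        = (\<Sum>i\<in>{1..r-1}. sg i (d i (p + int i) (q + int i - 1) (bb (r - 1 - i))))"
      proof (rule sum.cong[OF refl])
        fix i assume i: "i \<in> {1..r-1}"
        then have "r - 1 - i < r - 1" by auto
        then have e0: "b (r - 1 - i) = bb (r - 1 - i)" by (simp add: b_def)
        have e: "q - 1 + int i = q + int i - 1" by simp
        show "sg i (d i (p + int i) (q - 1 + int i) (b (r - 1 - i))) = sg i (d i (p + int i) (q + int i - 1) (bb (r - 1 - i)))"
          by (simp only: e e0)
      qed
      show ?thesis unfolding a0e sum_lessThan_0_split[OF r] s by (simp add: a'_def)
    qed
    finally show ?thesis .
  qed
  have cm: "c j \<in> A (p - 1 - int j) (q - 1 - int j)" for j
  proof (cases "j < r - 1")
    case True
    have e: "p - int (j + 1) = p - 1 - int j" "q - int (j + 1) = q - 1 - int j" by auto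
    have "a (j + 1) - U (j + 1) \<in> A (p - int (j + 1)) (q - int (j + 1))"
      using ZW_mem[OF a] Um by blast
    then show ?thesis using True unfolding c_def e by simp
  qed (simp add: c_def)
  have cc: "Ds (p - 1) (q - 1) c t = 0" if t: "t < r - 1" for t
  proof -
    have "Ds (p - 1) (q - 1) c t = Ds p q (\<lambda>j. if j = 0 then 0 else c (j - 1)) (Suc t)"
      by (rule Ds_shift[symmetric])
    also have "\<dots> = Ds p q (\<lambda>j. a j - U j) (Suc t)"
      using t U0 by (intro Ds_cong) (auto simp: c_def)
    also have "\<dots> = Ds p q a (Suc t) - Ds p q U (Suc t)"
      by (rule Ds_diff) (use ZW_mem[OF a] Um in auto)
    also have "\<dots> = 0" using a t Uc unfolding ZW_iff by simp
    finally show ?thesis .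
  qed
  have bw: "(b, a', c) \<in> BW A d r p (q - 1)"
  proof (cases "r = 1")
    case True
    then have "b = (\<lambda>_. 0)" "c = (\<lambda>_. 0)" by (auto simp: b_def c_def)
    then show ?thesis using True a'm unfolding BW_def by simp
  next
    case False
    have "b \<in> ZW A d (r - 1) (p + int r - 1) (q - 1 + int r - 1)"
      unfolding ZW_iff using False bm bc by (auto simp: b_def)
    moreover have "c \<in> ZW A d (r - 1) (p - 1) (q - 1)"
      unfolding ZW_iff using False cm cc by (auto simp: c_def)
    ultimately show ?thesis using False r a'm unfolding BW_def by auto
  qed
  have "w A d r p q (b, a', c) = a"
  proof
    fix j
    show "w A d r p q (b, a', c) j = a j"
    proof (cases "j < r")
      case True
      then show ?thesis using w_eq[OF r True, of p q b a' c] U0 unfolding U_def[symmetric]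
        by (auto simp: c_def)
    next
      case False
      then show ?thesis using w_zero[of r j] a mr unfolding ZW_iff by auto
    qed
  qed
  then show ?thesis using bw by (metis rev_image_eqI)
qed

lemma delta_reidx:
  assumes j: "j < r"
  shows "delta d r p q a j = (\<Sum>m<r. sg (r - m) (d (r - m + j) (p - int m) (q - int m) (a m)))"
proof -
  have "delta d r p q a j = (\<Sum>i\<in>{1..r}. sg i (d (i + j) (p - int r + int i) (q - int r + int i) (a (r - i))))"
    unfolding delta_def using j by simp
  also have "\<dots> = (\<Sum>m<r. sg (r - m) (d (r - m + j) (p - int m) (q - int m) (a m)))"
  proof (rule sum.reindex_bij_witness[where i="\<lambda>m. r - m" and j="\<lambda>i. r - i"])
    fix i assume i: "i \<in> {1..r}"
    have e: "r - (r - i) = i" "r - (r - i) + j = i + j" "p - int (r - i) = p - int r + int i" "q - int (r - i) = q - int r + int i"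
      using i by (auto simp: of_nat_diff)
    show "sg (r - (r - i)) (d (r - (r - i) + j) (p - int (r - i)) (q - int (r - i)) (a (r - i))) =
       sg i (d (i + j) (p - int r + int i) (q - int r + int i) (a (r - i)))"
      by (simp only: e)
  qed auto
  finally show ?thesis .
qed

lemma delta_ZW:
  assumes a: "a \<in> ZW A d r p q"
  shows "delta d r p q a \<in> ZW A d r (p - int r) (q + 1 - int r)"
proof (cases "r = 0")
  case True
  then show ?thesis unfolding ZW_iff delta_def by simp
next
  case False
  then have r: "r \<ge> 1" by simp
  have mr: "max r 1 = r" using r by simp
  show ?thesis unfolding ZW_iff mr
  proof (intro conjI allI impI)
    fix k assume k: "k < r"
    show "delta d r p q a k \<in> A (p - int r - int k) (q + 1 - int r - int k)"
      unfolding delta_reidx[OF k]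
      by (intro Asum Asg dA'[OF ZW_mem[OF a]]) (use k in \<open>auto simp: of_nat_diff\<close>)
  next
    fix k assume "r \<le> k" then show "delta d r p q a k = 0" by (simp add: delta_def)
  next
    fix l assume l: "l < r"
    show "Ds (p - int r) (q + 1 - int r) (delta d r p q a) l = 0"
    proof (rule G[where R=r and b=a and P=p and Q=q])
      fix m show "m < r \<Longrightarrow> a m \<in> A (p - int m) (q - int m)" using ZW_mem[OF a] by blast
    next
      fix t show "t < r \<Longrightarrow> Ds p q a t = 0" using a unfolding ZW_iff by simp
    next
      fix j assume "j \<le> l"
      then have "j < r" using l by simp
      then show "delta d r p q a j = (\<Sum>m<r. sg (r - m) (d (r - m + j) (p - int m) (q - int m) (a m)))"
        by (rule delta_reidx)
    qed simp_all
  qed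
qed

lemma delta_w:
  assumes x: "x \<in> BW A d r p (q - 1)"
  shows "delta d r p q (w A d r p q x) 0 \<in> Br A d r (p - int r) (q + 1 - int r)"
proof (cases "r = 0")
  case True then show ?thesis by (simp add: delta_def Br_def)
next
  case False
  then have r: "r \<ge> 1" by simp
  obtain b a' c where xe: "x = (b, a', c)" by (cases x) auto
  note F = BW_facts[OF r x[unfolded xe]]
  show ?thesis unfolding xe
  proof (rule delta0_Br[where U="Uf r p q b a'" and c=c])
    show "1 \<le> r" by (rule r)
    fix j
    show "j < r \<Longrightarrow> w A d r p q (b, a', c) j = Uf r p q b a' j + (if j = 0 then 0 else c (j - 1))"
      by (rule w_eq[OF r])
    show "Uf r p q b a' j \<in> A (p - int j) (q - int j)" by (rule Uf_mem[OF r F(1) F(2)])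
    show "c j \<in> A (p - 1 - int j) (q - 1 - int j)" by (rule F(4))
  next
    fix l show "Ds p q (Uf r p q b a') l = 0" by (rule Uf_cycle[OF r F(1) F(2) F(3)])
  next
    fix t show "t < r - 1 \<Longrightarrow> Ds (p - 1) (q - 1) c t = 0" by (rule F(5))
  qed
qed

lemma delta_diff:
  assumes a: "a \<in> ZW A d r p q" and a': "a' \<in> ZW A d r p q"
  shows "delta d r p q (\<lambda>k. a k - a' k) 0 = delta d r p q a 0 - delta d r p q a' 0"
proof (cases "r = 0")
  case True then show ?thesis by (simp add: delta_def)
next
  case False
  have m: "a (r - i) \<in> A (p - int r + int i) (q - int r + int i)" "a' (r - i) \<in> A (p - int r + int i) (q - int r + int i)"
    if "i \<in> {1..r}" for i
  proof -
    have e: "p - int (r - i) = p - int r + int i" "q - int (r - i) = q - int r + int i" using that by (auto simp: of_nat_diff)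
    show "a (r - i) \<in> A (p - int r + int i) (q - int r + int i)" using ZW_mem[OF a, of "r - i"] by (simp only: e)
    show "a' (r - i) \<in> A (p - int r + int i) (q - int r + int i)" using ZW_mem[OF a', of "r - i"] by (simp only: e)
  qed
  have "(\<Sum>i\<in>{1..r}. sg i (d (i + 0) (p - int r + int i) (q - int r + int i) (a (r - i) - a' (r - i))))
    = (\<Sum>i\<in>{1..r}. sg i (d (i + 0) (p - int r + int i) (q - int r + int i) (a (r - i))))
    - (\<Sum>i\<in>{1..r}. sg i (d (i + 0) (p - int r + int i) (q - int r + int i) (a' (r - i))))"
    unfolding sum_subtractf[symmetric]
  proof (rule sum.cong[OF refl])
    fix i assume i: "i \<in> {1..r}"
    show "sg i (d (i + 0) (p - int r + int i) (q - int r + int i) (a (r - i) - a' (r - i))) =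
      sg i (d (i + 0) (p - int r + int i) (q - int r + int i) (a (r - i))) - sg i (d (i + 0) (p - int r + int i) (q - int r + int i) (a' (r - i)))"
      by (simp only: ddiff[OF m(1)[OF i] m(2)[OF i]] sg_diff)
  qed
  moreover have r0: "0 < r" using False by simp
  ultimately show ?thesis unfolding delta_def by (simp only: if_P[OF r0] if_True)
qed

end



context
  fixes scale :: "'r::comm_ring_1 \<Rightarrow> 'a::ab_group_add \<Rightarrow> 'a" and n :: enat and A :: "int \<Rightarrow> int \<Rightarrow> 'a set"
    and d :: "nat \<Rightarrow> int \<Rightarrow> int \<Rightarrow> 'a \<Rightarrow> 'a"
    and scale' :: "'r \<Rightarrow> 'b::ab_group_add \<Rightarrow> 'b" and n' :: enat and A' :: "int \<Rightarrow> int \<Rightarrow> 'b set"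
    and d' :: "nat \<Rightarrow> int \<Rightarrow> int \<Rightarrow> 'b \<Rightarrow> 'b"
    and f :: "int \<Rightarrow> int \<Rightarrow> 'a \<Rightarrow> 'b"
  assumes mc1: "multicomplex scale n A d" and mc2: "multicomplex scale' n' A' d'"
    and morph: "mc_morphism scale A d scale' A' d' f"
begin

lemma MC1: "MC scale n A d" by unfold_locales (rule mc1)
lemma MC2: "MC scale' n' A' d'" by unfold_locales (rule mc2)
lemmas mcsimps[simp] = MC.A0[OF MC1] MC.A0[OF MC2] MC.d0[OF MC1] MC.d0[OF MC2]


lemma fA: "x \<in> A p q \<Longrightarrow> f p q x \<in> A' p q"
  using morph unfolding mc_morphism_def by blast
lemma fadd: "x \<in> A p q \<Longrightarrow> y \<in> A p q \<Longrightarrow> f p q (x + y) = f p q x + f p q y"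
  using morph unfolding mc_morphism_def by blast
lemma fd: "x \<in> A p q \<Longrightarrow> f (p - int i) (q + 1 - int i) (d i p q x) = d' i p q (f p q x)"
  using morph unfolding mc_morphism_def by blast
lemma f0[simp]: "f p q 0 = 0"
  using fadd[of 0 p q 0] by simp
lemma fneg: "x \<in> A p q \<Longrightarrow> f p q (- x) = - f p q x"
proof -
  assume x: "x \<in> A p q"
  have "f p q x + f p q (- x) = 0" using fadd[of x p q "-x"] x by (simp add: MC.Aneg[OF MC1])
  then show ?thesis by (metis minus_unique)
qed
lemma fdiff: "x \<in> A p q \<Longrightarrow> y \<in> A p q \<Longrightarrow> f p q (x - y) = f p q x - f p q y"
  using fadd[of x p q "-y"] fneg[of y p q] by (simp add: MC.Aneg[OF MC1])
lemma fsg: "x \<in> A p q \<Longrightarrow> f p q (sg j x) = sg j (f p q x)"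
  by (simp add: sg_def fneg)
lemma fsum: "finite S \<Longrightarrow> (\<And>x. x \<in> S \<Longrightarrow> g x \<in> A p q) \<Longrightarrow> f p q (sum g S) = (\<Sum>x\<in>S. f p q (g x))"
proof (induction S rule: finite_induct)
  case empty then show ?case by simp
next
  case (insert x F)
  then show ?case by (simp add: fadd MC.Asum[OF MC1])
qed

lemma fd': "x \<in> A P Q \<Longrightarrow> P0 = P - int k \<Longrightarrow> Q0 = Q + 1 - int k \<Longrightarrow> f P0 Q0 (d k P Q x) = d' k P Q (f P Q x)"
  using fd by simp

lemma f_sumd:
  assumes S: "finite S"
    and x: "\<And>i. i \<in> S \<Longrightarrow> x i \<in> A (P i) (Q i)"
    and P: "\<And>i. i \<in> S \<Longrightarrow> P0 = P i - int (k i)"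
    and Q: "\<And>i. i \<in> S \<Longrightarrow> Q0 = Q i + 1 - int (k i)"
  shows "f P0 Q0 (\<Sum>i\<in>S. sg (s i) (d (k i) (P i) (Q i) (x i))) = (\<Sum>i\<in>S. sg (s i) (d' (k i) (P i) (Q i) (f (P i) (Q i) (x i))))"
proof -
  have m: "d (k i) (P i) (Q i) (x i) \<in> A P0 Q0" if "i \<in> S" for i
    using that by (intro MC.dA'[OF MC1 x]) (auto simp: P Q)
  have "f P0 Q0 (\<Sum>i\<in>S. sg (s i) (d (k i) (P i) (Q i) (x i))) = (\<Sum>i\<in>S. f P0 Q0 (sg (s i) (d (k i) (P i) (Q i) (x i))))"
    by (rule fsum[OF S]) (intro MC.Asg[OF MC1] m)
  also have "\<dots> = (\<Sum>i\<in>S. sg (s i) (d' (k i) (P i) (Q i) (f (P i) (Q i) (x i))))"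
  proof (intro sum.cong refl)
    fix i assume i: "i \<in> S"
    show "f P0 Q0 (sg (s i) (d (k i) (P i) (Q i) (x i))) = sg (s i) (d' (k i) (P i) (Q i) (f (P i) (Q i) (x i)))"
      using fsg[OF m[OF i]] fd'[OF x[OF i] P[OF i] Q[OF i]] by simp
  qed
  finally show ?thesis .
qed

lemma f_Ds:
  assumes a: "\<And>j. j \<le> l \<Longrightarrow> a j \<in> A (P - int j) (Q - int j)"
  shows "f (P - int l) (Q + 1 - int l) (MC.Ds d P Q a l) = MC.Ds d' P Q (\<lambda>j. f (P - int j) (Q - int j) (a j)) l"
  unfolding MC.Ds_def[OF MC1] MC.Ds_def[OF MC2]
proof (rule f_sumd)
  fix i assume i: "i \<in> {..l}"
  show "a (l - i) \<in> A (P - int (l - i)) (Q - int (l - i))" using a[of "l - i"] i by simp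
  show "P - int l = P - int (l - i) - int i" "Q + 1 - int l = Q - int (l - i) + 1 - int i" using i by auto
qed simp

lemma ZWmap_eq: "a \<in> ZW A d r p q \<Longrightarrow> ZWmap f r p q a = (\<lambda>k. f (p - int k) (q - int k) (a k))"
proof -
  assume a: "a \<in> ZW A d r p q"
  show ?thesis unfolding ZWmap_def
  proof
    fix k show "(if k < max r 1 then f (p - int k) (q - int k) (a k) else 0) = f (p - int k) (q - int k) (a k)"
    proof (cases "k < max r 1")
      case False then have "a k = 0" using a unfolding MC.ZW_iff[OF MC1] by (metis not_less)
      then show ?thesis by simp
    qed simp
  qed
qed

lemma ZWmap_ZW:
  assumes a: "a \<in> ZW A d r p q"
  shows "ZWmap f r p q a \<in> ZW A' d' r p q"
  unfolding ZWmap_eq[OF a] MC.ZW_iff[OF MC2]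
proof (intro conjI allI impI)
  fix i show "f (p - int i) (q - int i) (a i) \<in> A' (p - int i) (q - int i)" by (rule fA[OF MC.ZW_mem[OF MC1 a]])
next
  fix i assume "max r 1 \<le> i" then show "f (p - int i) (q - int i) (a i) = 0" using a unfolding MC.ZW_iff[OF MC1] by simp
next
  fix l assume l: "l < r"
  have "MC.Ds d' p q (\<lambda>j. f (p - int j) (q - int j) (a j)) l = f (p - int l) (q + 1 - int l) (MC.Ds d p q a l)"
    by (rule f_Ds[symmetric]) (rule MC.ZW_mem[OF MC1 a])
  then show "MC.Ds d' p q (\<lambda>j. f (p - int j) (q - int j) (a j)) l = 0" using a l unfolding MC.ZW_iff[OF MC1] by simp
qed

lemma f_Br:
  assumes y: "y \<in> Br A d r p q"
  shows "f p q y \<in> Br A' d' r p q"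
proof (cases "r = 0")
  case True then show ?thesis using y unfolding Br_def by simp
next
  case False
  then have r: "r \<ge> 1" by simp
  from y False obtain b where
        b: "\<forall>i<r. b i \<in> A (p + int r - 1 - int i) (q + int r - 2 - int i)"
    and yb: "y = (\<Sum>i<r. sg i (d i (p + int i) (q + int i - 1) (b (r - 1 - i))))"
    and bc: "\<forall>l. l + 2 \<le> r \<longrightarrow> (\<Sum>i\<le>l. sg i (d i (p + int r - 1 - int l + int i) (q + int r - 2 - int l + int i) (b (l - i)))) = 0"
    unfolding Br_def by auto
  define bb where "bb i = f (p + int r - 1 - int i) (q + int r - 2 - int i) (b i)" for i
  show ?thesis
  proof (rule MC.BrI[OF MC2, where bb=bb])
    show "1 \<le> r" by (rule r)
    show "f p q y \<in> A' p q" by (rule fA[OF MC.Br_mem[OF MC1 y]])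
    fix i assume "i < r"
    then show "bb i \<in> A' (p + int r - 1 - int i) (q + int r - 2 - int i)" unfolding bb_def using b fA by blast
  next
    have "f p q y = (\<Sum>i<r. sg i (d' i (p + int i) (q + int i - 1) (f (p + int i) (q + int i - 1) (b (r - 1 - i)))))"
      unfolding yb
    proof (rule f_sumd)
      fix i assume i: "i \<in> {..<r}"
      have e: "p + int r - 1 - int (r - 1 - i) = p + int i" "q + int r - 2 - int (r - 1 - i) = q + int i - 1"
        using i by (auto simp: of_nat_diff)
      have "r - 1 - i < r" using i by auto
      then have "b (r - 1 - i) \<in> A (p + int r - 1 - int (r - 1 - i)) (q + int r - 2 - int (r - 1 - i))" using b by blast
      then show "b (r - 1 - i) \<in> A (p + int i) (q + int i - 1)" by (simp only: e)
    qed auto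
    also have "\<dots> = (\<Sum>i<r. sg i (d' i (p + int i) (q + int i - 1) (bb (r - 1 - i))))"
    proof (rule sum.cong[OF refl])
      fix i assume i: "i \<in> {..<r}"
      have e: "p + int r - 1 - int (r - 1 - i) = p + int i" "q + int r - 2 - int (r - 1 - i) = q + int i - 1"
        using i by (auto simp: of_nat_diff)
      show "sg i (d' i (p + int i) (q + int i - 1) (f (p + int i) (q + int i - 1) (b (r - 1 - i)))) =
         sg i (d' i (p + int i) (q + int i - 1) (bb (r - 1 - i)))" unfolding bb_def e ..
    qed
    finally show "f p q y = (\<Sum>i<r. sg i (d' i (p + int i) (q + int i - 1) (bb (r - 1 - i))))" .
  next
    fix l assume l: "l + 2 \<le> r"
    have "(\<Sum>i\<le>l. sg i (d' i (p + int r - 1 - int l + int i) (q + int r - 2 - int l + int i) (bb (l - i))))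
      = (\<Sum>i\<le>l. sg i (d' i (p + int r - 1 - int l + int i) (q + int r - 2 - int l + int i)
           (f (p + int r - 1 - int l + int i) (q + int r - 2 - int l + int i) (b (l - i)))))"
    proof (rule sum.cong[OF refl])
      fix i assume i: "i \<in> {..l}"
      have e: "p + int r - 1 - int (l - i) = p + int r - 1 - int l + int i" "q + int r - 2 - int (l - i) = q + int r - 2 - int l + int i"
        using i by (auto simp: of_nat_diff)
      show "sg i (d' i (p + int r - 1 - int l + int i) (q + int r - 2 - int l + int i) (bb (l - i))) =
        sg i (d' i (p + int r - 1 - int l + int i) (q + int r - 2 - int l + int i)
           (f (p + int r - 1 - int l + int i) (q + int r - 2 - int l + int i) (b (l - i))))"
        unfolding bb_def e ..
    qed
    also have "\<dots> = f (p + int r - 1 - int l) (q + int r - 1 - int l)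
        (\<Sum>i\<le>l. sg i (d i (p + int r - 1 - int l + int i) (q + int r - 2 - int l + int i) (b (l - i))))"
    proof (rule f_sumd[symmetric])
      fix i assume i: "i \<in> {..l}"
      have e: "p + int r - 1 - int (l - i) = p + int r - 1 - int l + int i" "q + int r - 2 - int (l - i) = q + int r - 2 - int l + int i"
        using i by (auto simp: of_nat_diff)
      have "l - i < r" using i l by auto
      then have "b (l - i) \<in> A (p + int r - 1 - int (l - i)) (q + int r - 2 - int (l - i))" using b by blast
      then show "b (l - i) \<in> A (p + int r - 1 - int l + int i) (q + int r - 2 - int l + int i)" by (simp only: e)
    qed auto
    also have "\<dots> = 0" using bc l by simp
    finally show "(\<Sum>i\<le>l. sg i (d' i (p + int r - 1 - int l + int i) (q + int r - 2 - int l + int i) (bb (l - i)))) = 0" .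
  qed
qed

lemma Emap_pi:
  assumes a: "a \<in> ZW A d r p q"
  shows "Emap A' d' f r p q (pi_r A d r p q a) = pi_r A' d' r p q (ZWmap f r p q a)"
proof -
  define X where "X = ecl A d r p q (a 0)"
  have "a 0 \<in> X" unfolding X_def ecl_def using MC.Br_0[OF MC1] by (auto intro!: image_eqI[of _ _ 0])
  then have zX: "(SOME z. z \<in> X) \<in> X" by (rule someI)
  then obtain y where y: "y \<in> Br A d r p q" and z: "(SOME z. z \<in> X) = a 0 + y" unfolding X_def ecl_def by auto
  have a0: "a 0 \<in> A p q" using MC.ZW_mem[OF MC1 a, of 0] by simp
  have "Emap A' d' f r p q (pi_r A d r p q a) = ecl A' d' r p q (f p q (a 0) + f p q y)"
    unfolding Emap_def pi_r_def zr_def X_def[symmetric] z using fadd[OF a0 MC.Br_mem[OF MC1 y]] by simp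
  also have "\<dots> = ecl A' d' r p q (f p q (a 0))"
    unfolding MC.ecl_eq_iff[OF MC2] using f_Br[OF y] by simp
  also have "\<dots> = pi_r A' d' r p q (ZWmap f r p q a)"
    unfolding pi_r_def zr_def ZWmap_def by simp
  finally show ?thesis .
qed

lemma ZWmap_w:
  assumes x: "x \<in> BW A d r p (q - 1)"
  shows "ZWmap f r p q (w A d r p q x) \<in> w A' d' r p q ` BW A' d' r p (q - 1)"
proof (cases "r = 0")
  case True
  then have "x = ((\<lambda>_. 0), 0, (\<lambda>_. 0))" using x MC.BW0[OF MC1] by auto
  moreover have "ZWmap f 0 p q (\<lambda>_. 0) = w A' d' 0 p q ((\<lambda>_. 0), 0, (\<lambda>_. 0))"
    by (simp add: ZWmap_def MC.w_0[OF MC2] fun_eq_iff)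
  moreover have "((\<lambda>_. 0), 0, (\<lambda>_. 0)) \<in> BW A' d' 0 p (q - 1)" by (simp add: MC.BW0[OF MC2])
  ultimately show ?thesis using True MC.w_0[OF MC1] by (metis rev_image_eqI)
next
  case False
  then have r: "r \<ge> 1" by simp
  obtain b a' c where xe: "x = (b, a', c)" by (cases x) auto
  note F = MC.BW_facts[OF MC1 r x[unfolded xe]]
  define b' where "b' m = f (p + int r - 1 - int m) (q - 1 + int r - 1 - int m) (b m)" for m
  define c' where "c' j = f (p - 1 - int j) (q - 1 - int j) (c j)" for j
  define a'' where "a'' = f p (q - 1) a'"
  have bw: "(b', a'', c') \<in> BW A' d' r p (q - 1)"
  proof (cases "r = 1")
    case True
    then have "b = (\<lambda>_. 0)" "c = (\<lambda>_. 0)" using x xe unfolding BW_def by auto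
    then have "b' = (\<lambda>_. 0)" "c' = (\<lambda>_. 0)" by (auto simp: b'_def c'_def)
    then show ?thesis using True fA[OF F(1)] unfolding BW_def a''_def by simp
  next
    case False
    then have bz: "b \<in> ZW A d (r - 1) (p + int r - 1) (q - 1 + int r - 1)" and cz: "c \<in> ZW A d (r - 1) (p - 1) (q - 1)"
      using x xe r unfolding BW_def by auto
    have "b' = ZWmap f (r - 1) (p + int r - 1) (q - 1 + int r - 1) b" unfolding ZWmap_eq[OF bz] b'_def ..
    then have "b' \<in> ZW A' d' (r - 1) (p + int r - 1) (q - 1 + int r - 1)" using ZWmap_ZW[OF bz] by simp
    moreover have "c' = ZWmap f (r - 1) (p - 1) (q - 1) c" unfolding ZWmap_eq[OF cz] c'_def ..
    then have "c' \<in> ZW A' d' (r - 1) (p - 1) (q - 1)" using ZWmap_ZW[OF cz] by simp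
    ultimately show ?thesis using False r fA[OF F(1)] unfolding BW_def a''_def by auto
  qed
  have wz: "w A d r p q x \<in> ZW A d r p q" using MC.wBW(1)[OF MC1 x] .
  have "ZWmap f r p q (w A d r p q x) = w A' d' r p q (b', a'', c')"
  proof
    fix k
    show "ZWmap f r p q (w A d r p q x) k = w A' d' r p q (b', a'', c') k"
    proof (cases "k < r")
      case k: True
      have Um: "MC.Uf d r p q b a' k \<in> A (p - int k) (q - int k)" by (rule MC.Uf_mem[OF MC1 r F(1) F(2)])
      have sm: "(if k = 0 then 0 else c (k - 1)) \<in> A (p - int k) (q - int k)" by (rule MC.shift_mem[OF MC1 F(4)])
      have fU: "f (p - int k) (q - int k) (MC.Uf d r p q b a' k) = MC.Uf d' r p q b' a'' k"
      proof -
        have m1: "d k p (q - 1) a' \<in> A (p - int k) (q - int k)" by (rule MC.dA'[OF MC1 F(1)]) auto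
        have m2: "(\<Sum>m<r-1. sg (r - 1 - m) (d (r - 1 - m + k) (p + int r - 1 - int m) (q - 1 + int r - 1 - int m) (b m))) \<in> A (p - int k) (q - int k)"
          by (intro MC.Asum[OF MC1] MC.Asg[OF MC1] MC.dA'[OF MC1 F(2)]) (auto simp: of_nat_diff)
        have "f (p - int k) (q - int k) (MC.Uf d r p q b a' k) = f (p - int k) (q - int k) (d k p (q - 1) a')
           + f (p - int k) (q - int k) (\<Sum>m<r-1. sg (r - 1 - m) (d (r - 1 - m + k) (p + int r - 1 - int m) (q - 1 + int r - 1 - int m) (b m)))"
          unfolding MC.Uf_def[OF MC1] by (rule fadd[OF m1 m2])
        also have "f (p - int k) (q - int k) (d k p (q - 1) a') = d' k p (q - 1) a''"
          unfolding a''_def by (rule fd'[OF F(1)]) auto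
        also have "f (p - int k) (q - int k) (\<Sum>m<r-1. sg (r - 1 - m) (d (r - 1 - m + k) (p + int r - 1 - int m) (q - 1 + int r - 1 - int m) (b m)))
            = (\<Sum>m<r-1. sg (r - 1 - m) (d' (r - 1 - m + k) (p + int r - 1 - int m) (q - 1 + int r - 1 - int m) (b' m)))"
          unfolding b'_def
        proof (rule f_sumd)
          fix m assume "m \<in> {..<r-1}"
          then show "b m \<in> A (p + int r - 1 - int m) (q - 1 + int r - 1 - int m)" by (intro F(2)) simp
        qed (auto simp: of_nat_diff)
        finally show ?thesis unfolding MC.Uf_def[OF MC2] .
      qed
      have fs: "f (p - int k) (q - int k) (if k = 0 then 0 else c (k - 1)) = (if k = 0 then 0 else c' (k - 1))"
      proof (cases "k = 0")
        case False
        then have "p - 1 - int (k - 1) = p - int k" "q - 1 - int (k - 1) = q - int k" by (auto simp: of_nat_diff)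
        then show ?thesis using False unfolding c'_def by simp
      qed simp
      have "ZWmap f r p q (w A d r p q x) k = f (p - int k) (q - int k) (MC.Uf d r p q b a' k + (if k = 0 then 0 else c (k - 1)))"
      proof -
        have "ZWmap f r p q (w A d r p q x) k = f (p - int k) (q - int k) (w A d r p q x k)"
          by (simp only: ZWmap_eq[OF wz])
        then show ?thesis unfolding xe MC.w_eq[OF MC1 r k] .
      qed
      also have "\<dots> = MC.Uf d' r p q b' a'' k + (if k = 0 then 0 else c' (k - 1))"
        unfolding fadd[OF Um sm] fU fs ..
      also have "\<dots> = w A' d' r p q (b', a'', c') k" by (rule MC.w_eq[OF MC2 r k, symmetric])
      finally show ?thesis .
    next
      case False
      then show ?thesis using MC.w_zero[OF MC2, of r k] MC.w_zero[OF MC1, of r k] r by (simp add: ZWmap_def)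
    qed
  qed
  then show ?thesis using bw by (metis rev_image_eqI)
qed

end






theorem mainTheorem1:
  fixes scale :: "'r::comm_ring_1 \<Rightarrow> 'a::ab_group_add \<Rightarrow> 'a"
    and A :: "int \<Rightarrow> int \<Rightarrow> 'a set" and d :: "nat \<Rightarrow> int \<Rightarrow> int \<Rightarrow> 'a \<Rightarrow> 'a"
    and n :: enat and r :: nat and p q :: int
  assumes n2: "2 \<le> n"
    and mc: "multicomplex scale n A d"
  shows
    "pi_r A d r p q ` ZW A d r p q = Er A d r p q \<and>
     {a \<in> ZW A d r p q. pi_r A d r p q a = ecl A d r p q 0} = w A d r p q ` BW A d r p (q - 1) \<and>
     (\<forall>x \<in> BW A d r p (q - 1). w A d r p q x \<in> ZW A d r p q \<and>
        zr (w A d r p q x) = beta d r p q x \<and> beta d r p q x \<in> Br A d r p q) \<and>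
     (\<forall>a \<in> ZW A d r p q. \<forall>a' \<in> ZW A d r p q.
        pi_r A d r p q a = pi_r A d r p q a' \<longleftrightarrow> (\<lambda>k. a k - a' k) \<in> w A d r p q ` BW A d r p (q - 1)) \<and>
     (\<forall>(scale' :: 'r \<Rightarrow> 'b::ab_group_add \<Rightarrow> 'b) n' A' d' f.
       multicomplex scale' n' A' d' \<and> 2 \<le> n' \<and> mc_morphism scale A d scale' A' d' f \<longrightarrow>
       (\<forall>a \<in> ZW A d r p q. ZWmap f r p q a \<in> ZW A' d' r p q \<and>
           Emap A' d' f r p q (pi_r A d r p q a) = pi_r A' d' r p q (ZWmap f r p q a)) \<and>
       ZWmap f r p q ` w A d r p q ` BW A d r p (q - 1) \<subseteq> w A' d' r p q ` BW A' d' r p (q - 1)) \<and>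
     (\<forall>a \<in> ZW A d r p q. delta d r p q a \<in> ZW A d r (p - int r) (q + 1 - int r)) \<and>
     delta d r p q ` w A d r p q ` BW A d r p (q - 1)
       \<subseteq> w A d r (p - int r) (q + 1 - int r) ` BW A d r (p - int r) (q - int r) \<and>
     (\<forall>a \<in> ZW A d r p q.
        pi_r A d r (p - int r) (q + 1 - int r) (delta d r p q a) = Delta A d r p q (pi_r A d r p q a))"
proof -
  interpret M: MC scale n A d by unfold_locales (rule mc)
  have pi: "pi_r A d r p q a = ecl A d r p q (a 0)" for a :: "nat \<Rightarrow> 'a" and r p q
    unfolding pi_r_def zr_def ..
  have c1: "pi_r A d r p q ` ZW A d r p q = Er A d r p q"
    unfolding Er_def M.Zr_ZW image_image pi ..
  have c2: "{a \<in> ZW A d r p q. pi_r A d r p q a = ecl A d r p q 0} = w A d r p q ` BW A d r p (q - 1)"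
  proof (intro set_eqI iffI)
    fix a assume "a \<in> {a \<in> ZW A d r p q. pi_r A d r p q a = ecl A d r p q 0}"
    then have a: "a \<in> ZW A d r p q" and "a 0 - 0 \<in> Br A d r p q" unfolding pi M.ecl_eq_iff by auto
    then show "a \<in> w A d r p q ` BW A d r p (q - 1)" using M.hard by simp
  next
    fix a assume "a \<in> w A d r p q ` BW A d r p (q - 1)"
    then obtain x where x: "x \<in> BW A d r p (q - 1)" "a = w A d r p q x" by auto
    then show "a \<in> {a \<in> ZW A d r p q. pi_r A d r p q a = ecl A d r p q 0}"
      using M.wBW[OF x(1)] unfolding pi M.ecl_eq_iff by simp
  qed
  have c3: "\<forall>x \<in> BW A d r p (q - 1). w A d r p q x \<in> ZW A d r p q \<and>
        zr (w A d r p q x) = beta d r p q x \<and> beta d r p q x \<in> Br A d r p q"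
    using M.wBW unfolding zr_def by blast
  have c4: "\<forall>a \<in> ZW A d r p q. \<forall>a' \<in> ZW A d r p q.
        pi_r A d r p q a = pi_r A d r p q a' \<longleftrightarrow> (\<lambda>k. a k - a' k) \<in> w A d r p q ` BW A d r p (q - 1)"
  proof (intro ballI iffI)
    fix a a' assume a: "a \<in> ZW A d r p q" and a': "a' \<in> ZW A d r p q"
      and e: "pi_r A d r p q a = pi_r A d r p q a'"
    from e have "a 0 - a' 0 \<in> Br A d r p q" unfolding pi M.ecl_eq_iff .
    then show "(\<lambda>k. a k - a' k) \<in> w A d r p q ` BW A d r p (q - 1)"
      using M.hard[OF M.ZW_diff[OF a a']] by simp
  next
    fix a a' assume a: "a \<in> ZW A d r p q" and a': "a' \<in> ZW A d r p q"
      and e: "(\<lambda>k. a k - a' k) \<in> w A d r p q ` BW A d r p (q - 1)"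
    then obtain x where x: "x \<in> BW A d r p (q - 1)" "(\<lambda>k. a k - a' k) = w A d r p q x" by auto
    have "a 0 - a' 0 = w A d r p q x 0" using fun_cong[OF x(2), of 0] by simp
    then have "a 0 - a' 0 \<in> Br A d r p q" using M.wBW[OF x(1)] by simp
    then show "pi_r A d r p q a = pi_r A d r p q a'" unfolding pi M.ecl_eq_iff .
  qed
  have c5: "\<forall>(scale' :: 'r \<Rightarrow> 'b::ab_group_add \<Rightarrow> 'b) n' A' d' f.
       multicomplex scale' n' A' d' \<and> 2 \<le> n' \<and> mc_morphism scale A d scale' A' d' f \<longrightarrow>
       (\<forall>a \<in> ZW A d r p q. ZWmap f r p q a \<in> ZW A' d' r p q \<and>
           Emap A' d' f r p q (pi_r A d r p q a) = pi_r A' d' r p q (ZWmap f r p q a)) \<and>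
       ZWmap f r p q ` w A d r p q ` BW A d r p (q - 1) \<subseteq> w A' d' r p q ` BW A' d' r p (q - 1)"
  proof (intro allI impI)
    fix scale' :: "'r \<Rightarrow> 'b::ab_group_add \<Rightarrow> 'b" and n' A' d' f
    assume h: "multicomplex scale' n' A' d' \<and> 2 \<le> n' \<and> mc_morphism scale A d scale' A' d' f"
    have mc2: "multicomplex scale' n' A' d'" and morph: "mc_morphism scale A d scale' A' d' f" using h by auto
    show "(\<forall>a \<in> ZW A d r p q. ZWmap f r p q a \<in> ZW A' d' r p q \<and>
           Emap A' d' f r p q (pi_r A d r p q a) = pi_r A' d' r p q (ZWmap f r p q a)) \<and>
       ZWmap f r p q ` w A d r p q ` BW A d r p (q - 1) \<subseteq> w A' d' r p q ` BW A' d' r p (q - 1)"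
      using ZWmap_ZW[OF mc mc2 morph] Emap_pi[OF mc mc2 morph] ZWmap_w[OF mc mc2 morph] by blast
  qed
  have c6: "\<forall>a \<in> ZW A d r p q. delta d r p q a \<in> ZW A d r (p - int r) (q + 1 - int r)"
    using M.delta_ZW by blast
  have c7: "delta d r p q ` w A d r p q ` BW A d r p (q - 1)
       \<subseteq> w A d r (p - int r) (q + 1 - int r) ` BW A d r (p - int r) (q - int r)"
  proof
    fix y assume "y \<in> delta d r p q ` w A d r p q ` BW A d r p (q - 1)"
    then obtain x where x: "x \<in> BW A d r p (q - 1)" and y: "y = delta d r p q (w A d r p q x)" by auto
    have "y \<in> ZW A d r (p - int r) (q + 1 - int r)" unfolding y by (rule M.delta_ZW[OF M.wBW(1)[OF x]])
    moreover have "y 0 \<in> Br A d r (p - int r) (q + 1 - int r)" unfolding y by (rule M.delta_w[OF x])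
    ultimately have "y \<in> w A d r (p - int r) (q + 1 - int r) ` BW A d r (p - int r) (q + 1 - int r - 1)"
      by (rule M.hard)
    moreover have "q + 1 - int r - 1 = q - int r" by simp
    ultimately show "y \<in> w A d r (p - int r) (q + 1 - int r) ` BW A d r (p - int r) (q - int r)" by simp
  qed
  have c8: "\<forall>a \<in> ZW A d r p q.
        pi_r A d r (p - int r) (q + 1 - int r) (delta d r p q a) = Delta A d r p q (pi_r A d r p q a)"
  proof
    fix a assume a: "a \<in> ZW A d r p q"
    define X where "X = pi_r A d r p q a"
    define a'' where "a'' = (SOME a. a \<in> ZW A d r p q \<and> a 0 \<in> X)"
    have "a 0 \<in> X" unfolding X_def pi ecl_def using M.Br_0 by (auto intro!: image_eqI[of _ _ 0])
    then have "a'' \<in> ZW A d r p q \<and> a'' 0 \<in> X" unfolding a''_def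
      using someI[where P="\<lambda>a. a \<in> ZW A d r p q \<and> a 0 \<in> X" and x=a] a by blast
    then have a'': "a'' \<in> ZW A d r p q" and a''0: "a'' 0 \<in> X" by auto
    from a''0 obtain y where y: "y \<in> Br A d r p q" "a'' 0 = a 0 + y" unfolding X_def pi ecl_def by auto
    then have "(\<lambda>k. a'' k - a k) 0 \<in> Br A d r p q" by simp
    then have "(\<lambda>k. a'' k - a k) \<in> w A d r p q ` BW A d r p (q - 1)" by (rule M.hard[OF M.ZW_diff[OF a'' a]])
    then obtain x where x: "x \<in> BW A d r p (q - 1)" "(\<lambda>k. a'' k - a k) = w A d r p q x" by auto
    have "delta d r p q a'' 0 - delta d r p q a 0 = delta d r p q (w A d r p q x) 0"
      using M.delta_diff[OF a'' a] x(2) by simp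
    then have eq: "ecl A d r (p - int r) (q + 1 - int r) (delta d r p q a'' 0) = ecl A d r (p - int r) (q + 1 - int r) (delta d r p q a 0)"
      unfolding M.ecl_eq_iff using M.delta_w[OF x(1)] by simp
    have s: "(\<Sum>i\<in>{1..r}. sg i (d i (p - int (r - i)) (q - int (r - i)) (a'' (r - i)))) = delta d r p q a'' 0"
    proof (cases "r = 0")
      case True then show ?thesis by (simp add: delta_def)
    next
      case False
      then show ?thesis unfolding delta_def by (auto intro!: sum.cong simp: of_nat_diff algebra_simps)
    qed
    have "Delta A d r p q X = ecl A d r (p - int r) (q + 1 - int r) (delta d r p q a'' 0)"
      unfolding Delta_def a''_def[symmetric] Let_def s ..
    then show "pi_r A d r (p - int r) (q + 1 - int r) (delta d r p q a) = Delta A d r p q (pi_r A d r p q a)"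
      unfolding X_def pi eq by simp
  qed
  show ?thesis using c1 c2 c3 c4 c5 c6 c7 c8 by blast
qed



end
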